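(* For $f|N$ with $(f,N/f)\mid\frac{N}{N^*}$, $q_1 | \frac{N}{f}$, $q_2 | f$, and $\chi_i$ primitive modulo $q_i$ satisfying $\chi_1 \overline{\chi_2} \sim \psi$, let \begin{equation*} D_{\chi_1, \chi_2,f}(z,s, \psi) = \sum^{*}_{u \bmod{(f, N/f)}} \chi_1(-u) E_{\frac{1}{uf}}(z,s, \psi), \end{equation*} where the sum is over representatives $u$ of $(\mathbb Z/(f,N/f)\mathbb Z)^*$ chosen coprime to $N$. Then, with $s=1/2+it$, the functions $D_{\chi_1, \chi_2, f}(z,s,\psi)$ form an orthogonal basis for $\mathcal{E}_{t,\psi}(N)$.
   Context: Let $N\ge1$, $k\in\mathbb Z$, $\psi$ a Dirichlet character modulo $N$ with $\psi(-1)=(-1)^k$, induced by a primitive character of conductor $N^*$. For $\gamma=\begin{pmatrix}a&b\\c&d\end{pmatrix}$ put $j(\gamma,z)=\frac{cz+d}{|cz+d|}$ and $\psi(\gamma)=\psi(d)$. For a cusp $\mathfrak a$ of $\Gamma=\Gamma_0(N)$ with scaling matrix $\sigma_{\mathfrak a}$ which is singular for $\psi$ (i.e. $\psi(\sigma_{\mathfrak a}\begin{pmatrix}1&1\\0&1\end{pmatrix}\sigma_{\mathfrak a}^{-1})=1$), $E_{\mathfrak a}(z,s,\psi)=\sum_{\gamma\in\Gamma_{\mathfrak a}\backslash\Gamma}\overline{\psi}(\gamma)j(\sigma_{\mathfrak a}^{-1}\gamma,z)^{-k}(\mathrm{Im}\,\sigma_{\mathfrak a}^{-1}\gamma z)^s$.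 The cusp $\frac{1}{uf}$ ($f|N$, $(u,N)=1$) is singular for $\psi$ iff $(f,N/f)\mid N/N^*$. $\chi_1\overline{\chi_2}\sim\psi$ means both are induced by the same primitive character; the principal character modulo 1 counts as primitive. $\mathcal{E}_{t,\psi}(N)=\mathrm{span}\{E_{\mathfrak a}(z,1/2+it,\psi):\mathfrak a \text{ singular for }\psi\}$, equipped with the formal inner product defined by $\frac{1}{4\pi}\langle E_{\mathfrak a}(\cdot,1/2+it,\psi),E_{\mathfrak b}(\cdot,1/2+it,\psi)\rangle_{\mathrm{Eis}}=\delta_{\mathfrak a\mathfrak b}$ (for inequivalent singular cusps), extended bilinearly; this is well defined at least for $t\neq0$, where the $E_{\mathfrak a}$ are linearly independent. *)

theory Defs
  imports "HOL-Number_Theory.Number_Theory" "HOL-Analysis.Analysis"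
begin

definition dchar :: "nat \<Rightarrow> (int \<Rightarrow> complex) \<Rightarrow> bool" where
  "dchar q chi \<longleftrightarrow> q \<ge> 1 \<and>
     (\<forall>m n. chi (m * n) = chi m * chi n) \<and>
     (\<forall>n. chi (n + int q) = chi n) \<and>
     (\<forall>n. chi n = 0 \<longleftrightarrow> \<not> coprime n (int q))"

definition primitive_char :: "nat \<Rightarrow> (int \<Rightarrow> complex) \<Rightarrow> bool" where
  "primitive_char q chi \<longleftrightarrow> dchar q chi \<and>
     (\<forall>d::nat. d dvd q \<and> d < q \<longrightarrow>
        \<not> (\<forall>n. coprime n (int q) \<and> [n = 1] (mod int d) \<longrightarrow> chi n = 1))"

definition induced_by :: "nat \<Rightarrow> (int \<Rightarrow> complex) \<Rightarrow> nat \<Rightarrow> (int \<Rightarrow> complex) \<Rightarrow> bool" where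
  "induced_by M chi c chis \<longleftrightarrow> primitive_char c chis \<and> c dvd M \<and>
     (\<forall>n. chi n = (if coprime n (int M) then chis n else 0))"

text \<open>chi1 * conj chi2 ~ psi: both are induced by the same primitive character.
  (chi1 * conj chi2 is a character modulo lcm q1 q2.)\<close>
definition char_sim :: "nat \<Rightarrow> nat \<Rightarrow> (int \<Rightarrow> complex) \<Rightarrow> (int \<Rightarrow> complex)
    \<Rightarrow> nat \<Rightarrow> (int \<Rightarrow> complex) \<Rightarrow> bool" where
  "char_sim q1 q2 chi1 chi2 N psi \<longleftrightarrow> (\<exists>c chis.
     induced_by (lcm q1 q2) (\<lambda>n. chi1 n * cnj (chi2 n)) c chis \<and> induced_by N psi c chis)"

text \<open>The cusp 1/(u f) of Gamma_0(N), f | N, u a unit mod (f, N/f), is encoded as (f, r) with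
  r the residue of u mod (f, N/f), 0 \<le> r < (f, N/f). These form a complete set of
  inequivalent cusps; the singular ones are those with (f, N/f) | N/N*.\<close>
definition sing_cusps :: "nat \<Rightarrow> nat \<Rightarrow> (nat \<times> nat) set" where
  "sing_cusps N Nstar = {(f, r). f dvd N \<and> gcd f (N div f) dvd N div Nstar \<and>
      r < gcd f (N div f) \<and> coprime r (gcd f (N div f))}"

definition upper_half :: "complex set" where
  "upper_half = {z. Im z > 0}"

definition eis_span :: "(nat \<times> nat) set \<Rightarrow> (nat \<times> nat \<Rightarrow> complex \<Rightarrow> complex)
    \<Rightarrow> (complex \<Rightarrow> complex) set" where
  "eis_span C E = {F. \<exists>a. \<forall>z\<in>upper_half. F z = (\<Sum>c\<in>C. a c * E c z)}"

definition lin_indep_family :: "(nat \<times> nat) set \<Rightarrow> (nat \<times> nat \<Rightarrow> complex \<Rightarrow> complex) \<Rightarrow> bool" where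
  "lin_indep_family C E \<longleftrightarrow> (\<forall>a. (\<forall>z\<in>upper_half. (\<Sum>c\<in>C. a c * E c z) = 0) \<longrightarrow> (\<forall>c\<in>C. a c = 0))"

definition eis_coeffs :: "(nat \<times> nat) set \<Rightarrow> (nat \<times> nat \<Rightarrow> complex \<Rightarrow> complex)
    \<Rightarrow> (complex \<Rightarrow> complex) \<Rightarrow> nat \<times> nat \<Rightarrow> complex" where
  "eis_coeffs C E F = (SOME a. \<forall>z\<in>upper_half. F z = (\<Sum>c\<in>C. a c * E c z))"

text \<open>Formal inner product: <E_a, E_b>_Eis = 4 pi delta_ab, extended sesquilinearly.\<close>
definition formal_inner :: "(nat \<times> nat) set \<Rightarrow> (nat \<times> nat \<Rightarrow> complex \<Rightarrow> complex)
    \<Rightarrow> (complex \<Rightarrow> complex) \<Rightarrow> (complex \<Rightarrow> complex) \<Rightarrow> complex" where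
  "formal_inner C E F G = 4 * of_real pi *
     (\<Sum>c\<in>C. eis_coeffs C E F c * cnj (eis_coeffs C E G c))"

definition D_series :: "nat \<Rightarrow> nat \<Rightarrow> (nat \<Rightarrow> nat \<Rightarrow> int) \<Rightarrow> (nat \<times> nat \<Rightarrow> complex \<Rightarrow> complex)
    \<Rightarrow> nat \<Rightarrow> (int \<Rightarrow> complex) \<Rightarrow> complex \<Rightarrow> complex" where
  "D_series N Nstar rep E f chi1 =
     (\<lambda>z. \<Sum>r\<in>{r. (f, r) \<in> sing_cusps N Nstar}. chi1 (- rep f r) * E (f, r) z)"

definition D_index :: "nat \<Rightarrow> nat \<Rightarrow> (int \<Rightarrow> complex)
    \<Rightarrow> (nat \<times> (int \<Rightarrow> complex) \<times> (int \<Rightarrow> complex)) set" where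
  "D_index N Nstar psi = {(f, chi1, chi2). f dvd N \<and> gcd f (N div f) dvd N div Nstar \<and>
     (\<exists>q1 q2. q1 dvd N div f \<and> q2 dvd f \<and> primitive_char q1 chi1 \<and> primitive_char q2 chi2 \<and>
        char_sim q1 q2 chi1 chi2 N psi)}"

end

theory Submission imports Defs begin

lemma dchar_one: assumes "dchar q chi" shows "chi 1 = 1"
proof -
  have "chi 1 \<noteq> 0" using assms by (simp add: dchar_def)
  moreover have "chi 1 = chi 1 * chi 1" using assms unfolding dchar_def by (metis mult_1)
  then have "chi 1 * (chi 1 - 1) = 0" by (simp add: algebra_simps)
  ultimately show ?thesis by simp
qed

lemma dchar_mult: "dchar q chi \<Longrightarrow> chi (m * n) = chi m * chi n"
  by (simp add: dchar_def)

lemma dchar_zero_iff: "dchar q chi \<Longrightarrow> chi n = 0 \<longleftrightarrow> \<not> coprime n (int q)"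
  by (simp add: dchar_def)

lemma dchar_shift_nat: assumes "dchar q chi" shows "chi (n + int q * int k) = chi n"
proof (induction k arbitrary: n)
  case 0 then show ?case by simp
next
  case (Suc k)
  have "chi (n + int q * int (Suc k)) = chi ((n + int q * int k) + int q)" by (simp add: algebra_simps)
  also have "\<dots> = chi (n + int q * int k)" using assms by (simp add: dchar_def)
  finally show ?case using Suc by simp
qed

lemma dchar_shift: assumes "dchar q chi" shows "chi (n + int q * k) = chi n"
proof (cases "k \<ge> 0")
  case True then show ?thesis using dchar_shift_nat[OF assms, of n "nat k"] by simp
next
  case False
  have "chi ((n + int q * k) + int q * int (nat (-k))) = chi (n + int q * k)"
    by (rule dchar_shift_nat[OF assms])
  moreover have "(n + int q * k) + int q * int (nat (-k)) = n" using False by simp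
  ultimately show ?thesis by metis
qed

lemma dchar_cong: assumes "dchar q chi" "[m = n] (mod int q)" shows "chi m = chi n"
proof -
  obtain k where "n = m + int q * k" using assms(2) cong_iff_lin by blast
  then show ?thesis using dchar_shift[OF assms(1)] by simp
qed

lemma dchar_pow: "dchar q chi \<Longrightarrow> chi (n ^ k) = chi n ^ k"
  by (induction k) (simp_all add: dchar_one dchar_mult)

lemma euler_int: assumes "coprime n (int q)" shows "[n ^ totient q = 1] (mod int q)"
proof -
  define a where "a = nat (n mod int q)"
  show ?thesis
  proof (cases "q = 0")
    case True
    then show ?thesis by simp
  next
    case False
    have a: "int a = n mod int q" using False a_def by simp
    have "coprime (n mod int q) (int q)" using assms False by simp
    then have "coprime (int a) (int q)" using a by simp
    then have "coprime a q" by simp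
    then have "[a ^ totient q = 1] (mod q)" by (rule euler_theorem)
    then have "[int a ^ totient q = 1] (mod int q)" by (metis cong_int_iff of_nat_1 of_nat_power)
    moreover have "[n = int a] (mod int q)" using a by (simp add: cong_def)
    ultimately show ?thesis by (meson cong_pow cong_trans)
  qed
qed

lemma totient_pos': "q \<ge> 1 \<Longrightarrow> totient q \<ge> 1"
  by (simp add: Suc_le_eq)

lemma dchar_pow_tot: assumes "dchar q chi" "coprime n (int q)" shows "chi n ^ totient q = 1"
proof -
  have "chi n ^ totient q = chi (n ^ totient q)" using dchar_pow[OF assms(1)] by simp
  also have "\<dots> = chi 1" using dchar_cong[OF assms(1) euler_int[OF assms(2)]] .
  finally show ?thesis using dchar_one[OF assms(1)] by simp
qed

lemma dchar_norm: assumes "dchar q chi" "coprime n (int q)" shows "norm (chi n) = 1"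
proof -
  have q: "q \<ge> 1" using assms(1) by (simp add: dchar_def)
  have "norm (chi n) ^ totient q = 1" using dchar_pow_tot[OF assms] by (metis norm_one norm_power)
  then show ?thesis
    using power_eq_imp_eq_base[of "norm (chi n)" "totient q" 1] totient_pos'[OF q] q by simp
qed

lemma norm1_cnj: "norm (z::complex) = 1 \<Longrightarrow> z * cnj z = 1"
  using complex_norm_square[of z] by simp

lemma dchar_cnj_mult: assumes "dchar q chi" "coprime n (int q)" shows "chi n * cnj (chi n) = 1"
  using norm1_cnj[OF dchar_norm[OF assms]] .

lemma not_coprime_prime:
  fixes a b :: int assumes "\<not> coprime a b"
  obtains p where "prime p" "p dvd a" "p dvd b"
proof -
  obtain c where c: "c dvd a" "c dvd b" "\<not> is_unit c" using assms not_coprimeE by blast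
  show ?thesis
  proof (cases "c = 0")
    case True
    then have "a = 0" "b = 0" using c by auto
    then show ?thesis using that[of 2] by simp
  next
    case False
    then obtain p where "p dvd c" "prime p" using prime_divisor_exists c(3) by blast
    then show ?thesis using that c dvd_trans by blast
  qed
qed

lemma lift_coprime:
  fixes n q N :: int assumes N: "N \<noteq> 0" and nq: "coprime n q"
  shows "\<exists>k. [k = n] (mod q) \<and> coprime k N"
proof -
  define P where "P = {p \<in> prime_factors N. \<not> p dvd n \<and> \<not> p dvd q}"
  define t where "t = \<Prod>P"
  have "P \<subseteq> prime_factors N" unfolding P_def by blast
  then have fin: "finite P" using finite_subset by blast
  have tdvd: "p dvd t \<longleftrightarrow> p \<in> P" if pp: "prime p" for p
  proof
    assume "p dvd t"
    then obtain x where x: "x \<in> P" "p dvd x" unfolding t_def using prime_dvd_prod_iff[OF fin pp, of id] by auto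
    have "prime x" using x(1) unfolding P_def by auto
    then have "p = x" using primes_dvd_imp_eq[OF pp _ x(2)] by simp
    then show "p \<in> P" using x(1) by simp
  next
    assume pP: "p \<in> P"
    show "p dvd t" unfolding t_def using dvd_prodI[OF fin pP, of id] by simp
  qed
  define k where "k = n + q * t"
  have "n = k + q * (- t)" unfolding k_def by (simp add: algebra_simps)
  then have "[k = n] (mod q)" unfolding cong_iff_lin by blast
  moreover have "coprime k N"
  proof (rule ccontr)
    assume "\<not> coprime k N"
    then obtain p where p: "prime p" "p dvd k" "p dvd N" using not_coprime_prime by blast
    have pu: "\<not> is_unit p" using p(1) not_prime_unit by blast
    show False
    proof (cases "p dvd q")
      case True
      then have "p dvd n" using p(2) unfolding k_def by (metis dvd_add_left_iff dvd_mult2 add.commute)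
      then show False using nq True pu by (meson not_coprimeI)
    next
      case nq': False
      show False
      proof (cases "p dvd n")
        case True
        then have "p dvd q * t" using p(2) unfolding k_def by (simp add: dvd_add_right_iff)
        then have "p dvd t" using nq' p(1) prime_dvd_mult_iff by blast
        then have "p \<in> P" using tdvd p(1) by blast
        then show False using True unfolding P_def by simp
      next
        case False
        have "p \<in> prime_factors N" using p N by (simp add: in_prime_factors_iff)
        then have "p \<in> P" unfolding P_def using nq' False by simp
        then have "p dvd t" using tdvd p(1) by blast
        then have "p dvd q * t" by simp
        then have "p dvd n" using p(2) unfolding k_def by (simp add: dvd_add_left_iff)
        then show False using False by simp
      qed
    qed
  qed
  ultimately show ?thesis by blast
qed

lemma crt_gen:
  fixes a b n m :: int assumes "[n = m] (mod gcd a b)"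
  shows "\<exists>k. [k = n] (mod a) \<and> [k = m] (mod b)"
proof -
  obtain u v where uv: "u * a + v * b = gcd a b" using bezout_int by blast
  obtain s where s: "m = n + gcd a b * s" using assms cong_iff_lin by blast
  define k where "k = n + u * a * s"
  have "[k = n] (mod a)" unfolding k_def cong_iff_lin by (rule exI[of _ "- u * s"]) (simp add: algebra_simps)
  moreover have "[k = m] (mod b)" unfolding cong_iff_lin
    by (rule exI[of _ "v * s"]) (simp add: k_def s uv[symmetric] algebra_simps)
  ultimately show ?thesis by blast
qed

section \<open>Primitive characters\<close>

lemma prim_dvd:
  assumes p: "primitive_char q chi" and d': "dchar q' chi'" and N: "N \<noteq> 0"
    and eq: "\<forall>n. coprime n (int N) \<longrightarrow> chi n = chi' n"
  shows "q dvd q'"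
proof (rule ccontr)
  assume nd: "\<not> q dvd q'"
  have q1: "q \<ge> 1" using p by (simp add: primitive_char_def dchar_def)
  have dq: "gcd q q' dvd q" by simp
  have "gcd q q' \<noteq> q" using nd by (metis gcd_dvd2)
  moreover have "gcd q q' \<le> q" using q1 by (simp add: dvd_imp_le)
  ultimately have lt: "gcd q q' < q" by simp
  obtain n where n: "coprime n (int q)" "[n = 1] (mod int (gcd q q'))" "chi n \<noteq> 1"
    using p dq lt unfolding primitive_char_def by blast
  have "[n = 1] (mod gcd (int q) (int q'))" using n(2) by (simp add: gcd_int_def)
  then obtain k where k: "[k = n] (mod int q)" "[k = 1] (mod int q')" using crt_gen by blast
  have "coprime k (int q)" using k(1) n(1) by (meson cong_imp_coprime cong_sym)
  moreover have "coprime k (int q')" using k(2) by (meson cong_imp_coprime cong_sym coprime_1_left)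
  ultimately have kqq: "coprime k (int q * int q')" by simp
  obtain k' where k': "[k' = k] (mod int q * int q')" "coprime k' (int N)"
    using lift_coprime[of "int N" k "int q * int q'", OF _ kqq] N by auto
  have "[k' = n] (mod int q)" using k'(1) k(1) by (meson cong_modulus_mult cong_trans)
  then have "chi n = chi k'" using dchar_cong p unfolding primitive_char_def by (metis cong_sym)
  also have "\<dots> = chi' k'" using eq k'(2) by simp
  also have "\<dots> = chi' 1" using k'(1) k(2) d' by (metis cong_modulus_mult cong_trans mult.commute dchar_cong)
  also have "\<dots> = 1" using dchar_one[OF d'] .
  finally show False using n(3) by simp
qed

lemma prim_unique:
  assumes p: "primitive_char q chi" and p': "primitive_char q' chi'" and N: "N \<noteq> 0"
    and eq: "\<forall>n. coprime n (int N) \<longrightarrow> chi n = chi' n"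
  shows "chi = chi'"
proof -
  have d: "dchar q chi" "dchar q' chi'" using p p' by (auto simp: primitive_char_def)
  have "q dvd q'" using prim_dvd[OF p d(2) N eq] .
  moreover have "q' dvd q" using prim_dvd[OF p' d(1) N] eq by simp
  ultimately have qq: "q = q'" by (simp add: dvd_antisym)
  show ?thesis
  proof
    fix n
    show "chi n = chi' n"
    proof (cases "coprime n (int q)")
      case True
      then obtain k where k: "[k = n] (mod int q)" "coprime k (int N)" using lift_coprime[of "int N" n] N by auto
      have "chi n = chi k" using dchar_cong[OF d(1)] k(1) by (metis cong_sym)
      also have "\<dots> = chi' k" using eq k(2) by simp
      also have "\<dots> = chi' n" using dchar_cong[OF d(2)] k(1) qq by simp
      finally show ?thesis .
    next
      case False
      then show ?thesis using dchar_zero_iff[OF d(1), of n] dchar_zero_iff[OF d(2), of n] qq by simp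
    qed
  qed
qed

section \<open>Extension of characters\<close>

definition subgrp :: "nat \<Rightarrow> int set \<Rightarrow> (int \<Rightarrow> complex) \<Rightarrow> bool" where
  "subgrp M H chi \<longleftrightarrow> M \<ge> 1 \<and> 1 \<in> H \<and> (\<forall>a\<in>H. coprime a (int M)) \<and> (\<forall>a\<in>H. \<forall>b\<in>H. a * b \<in> H)
     \<and> (\<forall>a\<in>H. \<forall>b. [b = a] (mod int M) \<longrightarrow> b \<in> H)
     \<and> (\<forall>a\<in>H. \<forall>b\<in>H. chi (a * b) = chi a * chi b) \<and> (\<forall>a\<in>H. chi a \<noteq> 0)
     \<and> (\<forall>a\<in>H. \<forall>b\<in>H. [a = b] (mod int M) \<longrightarrow> chi a = chi b)"

lemma sgM: "subgrp M H chi \<Longrightarrow> M \<ge> 1" unfolding subgrp_def by blast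
lemma sg1: "subgrp M H chi \<Longrightarrow> 1 \<in> H" unfolding subgrp_def by blast
lemma sgcop: "subgrp M H chi \<Longrightarrow> a \<in> H \<Longrightarrow> coprime a (int M)" unfolding subgrp_def by blast
lemma sgmul: "subgrp M H chi \<Longrightarrow> a \<in> H \<Longrightarrow> b \<in> H \<Longrightarrow> a * b \<in> H" unfolding subgrp_def by blast
lemma sgcong: "subgrp M H chi \<Longrightarrow> a \<in> H \<Longrightarrow> [b = a] (mod int M) \<Longrightarrow> b \<in> H" unfolding subgrp_def by blast
lemma sgchimul: "subgrp M H chi \<Longrightarrow> a \<in> H \<Longrightarrow> b \<in> H \<Longrightarrow> chi (a * b) = chi a * chi b" unfolding subgrp_def by blast
lemma sgnz: "subgrp M H chi \<Longrightarrow> a \<in> H \<Longrightarrow> chi a \<noteq> 0" unfolding subgrp_def by blast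
lemma sgchicong: "subgrp M H chi \<Longrightarrow> a \<in> H \<Longrightarrow> b \<in> H \<Longrightarrow> [a = b] (mod int M) \<Longrightarrow> chi a = chi b" unfolding subgrp_def by blast

lemma sg_chi_one: assumes "subgrp M H chi" shows "chi 1 = 1"
proof -
  have "chi 1 \<noteq> 0" using sgnz[OF assms sg1[OF assms]] .
  moreover have "chi (1 * 1) = chi 1 * chi 1" using sgchimul[OF assms sg1[OF assms] sg1[OF assms]] .
  then have "chi 1 * (chi 1 - 1) = 0" by (simp add: algebra_simps)
  ultimately show ?thesis by simp
qed

lemma sg_chi_pow: assumes sg: "subgrp M H chi" and a: "a \<in> H" shows "chi (a ^ j) = chi a ^ j \<and> a ^ j \<in> H"
proof (induction j)
  case 0
  then show ?case using sg_chi_one[OF sg] sg1[OF sg] by simp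
next
  case (Suc j)
  then have "chi (a * a ^ j) = chi a * chi (a ^ j)" "a * a ^ j \<in> H" using sgchimul[OF sg a] sgmul[OF sg a] by auto
  then show ?case using Suc by simp
qed

lemma sg_pow: assumes "subgrp M H chi" "a \<in> H" shows "a ^ j \<in> H"
  using sg_chi_pow[OF assms] by blast

lemma sg_cancel: assumes sg: "subgrp M H chi" and a: "a \<in> H" and ab: "a * b \<in> H" shows "b \<in> H"
proof -
  define t where "t = totient M"
  have M: "M \<ge> 1" using sgM[OF sg] .
  have t: "t > 0" using totient_pos'[OF M] t_def M by simp
  have ac: "coprime a (int M)" using sgcop[OF sg a] .
  have "[a ^ t = 1] (mod int M)" using euler_int[OF ac] t_def by simp
  then have "[a ^ t * b = 1 * b] (mod int M)" by (rule cong_scalar_right)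
  moreover have e: "a ^ (t - 1) * (a * b) = a ^ t * b" by (metis mult.assoc power_minus_mult t)
  ultimately have c: "[a ^ (t - 1) * (a * b) = b] (mod int M)" unfolding e by simp
  have "a ^ (t - 1) \<in> H" using sg_pow[OF sg a] .
  then have "a ^ (t - 1) * (a * b) \<in> H" using sgmul[OF sg _ ab] by blast
  then show ?thesis using sgcong[OF sg] c cong_sym by blast
qed

lemma sg_step:
  assumes sg: "subgrp M H chi" and xc: "coprime x (int M)" and xn: "x \<notin> H"
    and m: "m = (LEAST m. m > 0 \<and> x ^ m \<in> H)" and w: "w ^ m = chi (x ^ m)"
  shows "\<exists>H' chi'. subgrp M H' chi' \<and> H \<subseteq> H' \<and> x \<in> H' \<and> (\<forall>a\<in>H. chi' a = chi a) \<and> chi' x = w"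
proof -
  have M: "M \<ge> 1" using sgM[OF sg] .
  define t where "t = totient M"
  have t: "t > 0" using totient_pos'[OF M] t_def M by simp
  have one: "1 \<in> H" using sg1[OF sg] .
  have "[x ^ t = 1] (mod int M)" using euler_int[OF xc] t_def by simp
  then have "x ^ t \<in> H" using sgcong[OF sg one] by blast
  then have ex: "\<exists>m. m > 0 \<and> x ^ m \<in> H" using t by blast
  have mp: "m > 0" "x ^ m \<in> H" using LeastI_ex[OF ex] m by auto
  have mmin: "x ^ j \<notin> H" if "0 < j" "j < m" for j
    using not_less_Least[of j "\<lambda>m. m > 0 \<and> x ^ m \<in> H"] that m by auto
  have powH: "x ^ j \<in> H \<longleftrightarrow> m dvd j" for j
  proof
    assume xj: "x ^ j \<in> H"
    define s r where "s = j div m" and "r = j mod m"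
    have "j = m * s + r" unfolding s_def r_def by simp
    then have "x ^ j = (x ^ m) ^ s * x ^ r" by (simp add: power_add power_mult)
    then have "(x ^ m) ^ s * x ^ r \<in> H" using xj by simp
    moreover have "(x ^ m) ^ s \<in> H" using sg_pow[OF sg mp(2)] .
    ultimately have "x ^ r \<in> H" using sg_cancel[OF sg] by blast
    moreover have "r < m" unfolding r_def using mp(1) by simp
    ultimately have "r = 0" using mmin by (meson neq0_conv)
    then show "m dvd j" unfolding r_def by auto
  next
    assume "m dvd j"
    then obtain s where "j = m * s" by blast
    then show "x ^ j \<in> H" using sg_pow[OF sg mp(2), of s] by (simp add: power_mult)
  qed
  have chiH: "chi a \<noteq> 0" if "a \<in> H" for a using sgnz[OF sg that] .
  have w0: "w \<noteq> 0"
  proof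
    assume "w = 0"
    then have "w ^ m = 0" using mp(1) by (simp add: zero_power)
    then show False using w chiH[OF mp(2)] by simp
  qed
  have WD0: "chi h * w ^ j = chi h' * w ^ j'"
    if h: "h \<in> H" "h' \<in> H" and c: "[h * x ^ j = h' * x ^ j'] (mod int M)" and jj: "j' \<le> j" for h h' j j'
  proof -
    define d where "d = j - j'"
    have jd: "j = d + j'" using jj d_def by simp
    have "[h * x ^ d * x ^ j' = h' * x ^ j'] (mod int M)" using c jd by (simp add: power_add mult.assoc)
    moreover have "coprime (x ^ j') (int M)" using xc by simp
    ultimately have c2: "[h * x ^ d = h'] (mod int M)" using cong_mult_rcancel by blast
    then have "h * x ^ d \<in> H" using sgcong[OF sg h(2)] by blast
    then have "x ^ d \<in> H" using sg_cancel[OF sg h(1)] by blast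
    then obtain s where s: "d = m * s" using powH by blast
    have "chi h' = chi (h * x ^ d)" using sgchicong[OF sg h(2) \<open>h * x ^ d \<in> H\<close>] c2 cong_sym by blast
    also have "\<dots> = chi h * chi (x ^ d)" using sgchimul[OF sg h(1) \<open>x ^ d \<in> H\<close>] .
    also have "chi (x ^ d) = chi ((x ^ m) ^ s)" using s by (simp add: power_mult)
    also have "\<dots> = chi (x ^ m) ^ s" using sg_chi_pow[OF sg mp(2)] by blast
    also have "\<dots> = w ^ d" using s w by (simp add: power_mult)
    finally have "chi h' = chi h * w ^ d" .
    then show ?thesis using jd by (simp add: power_add)
  qed
  have WD: "chi h * w ^ j = chi h' * w ^ j'"
    if h: "h \<in> H" "h' \<in> H" and c: "[h * x ^ j = h' * x ^ j'] (mod int M)" for h h' j j'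
  proof (cases "j' \<le> j")
    case True then show ?thesis using WD0[OF h c] by blast
  next
    case False then show ?thesis using WD0[OF h(2) h(1) cong_sym[OF c]] by simp
  qed
  define H' where "H' = {y. \<exists>h\<in>H. \<exists>j. [y = h * x ^ j] (mod int M)}"
  define chi' where "chi' y = (let p = (SOME p. fst p \<in> H \<and> [y = fst p * x ^ (snd p)] (mod int M))
                              in chi (fst p) * w ^ (snd p))" for y
  have chi'_eq: "chi' y = chi h * w ^ j" if h: "h \<in> H" and c: "[y = h * x ^ j] (mod int M)" for y h j
  proof -
    have "\<exists>p. fst p \<in> H \<and> [y = fst p * x ^ (snd p)] (mod int M)" using h c by (intro exI[of _ "(h, j)"]) simp
    then have sp: "fst (SOME p. fst p \<in> H \<and> [y = fst p * x ^ (snd p)] (mod int M)) \<in> H \<and>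
       [y = fst (SOME p. fst p \<in> H \<and> [y = fst p * x ^ (snd p)] (mod int M)) *
             x ^ snd (SOME p. fst p \<in> H \<and> [y = fst p * x ^ (snd p)] (mod int M))] (mod int M)"
      by (rule someI_ex)
    define p where "p = (SOME p. fst p \<in> H \<and> [y = fst p * x ^ (snd p)] (mod int M))"
    have p: "fst p \<in> H" "[y = fst p * x ^ (snd p)] (mod int M)" using sp unfolding p_def by auto
    have "[fst p * x ^ (snd p) = h * x ^ j] (mod int M)" using p(2) c by (meson cong_sym cong_trans)
    then have "chi (fst p) * w ^ (snd p) = chi h * w ^ j" using WD p(1) h by blast
    then show ?thesis unfolding chi'_def p_def[symmetric] by (simp add: Let_def)
  qed
  have sub: "subgrp M H' chi'"
    unfolding subgrp_def
  proof (intro conjI ballI allI impI)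
    show "M \<ge> 1" by (rule M)
    show "1 \<in> H'" unfolding H'_def using one by (intro CollectI bexI[of _ 1] exI[of _ 0]) auto
  next
    fix a assume "a \<in> H'"
    then obtain h j where hj: "h \<in> H" "[a = h * x ^ j] (mod int M)" unfolding H'_def by blast
    have "coprime (h * x ^ j) (int M)" using sgcop[OF sg hj(1)] xc by simp
    then show "coprime a (int M)" using hj(2) by (meson cong_imp_coprime cong_sym)
    show "chi' a \<noteq> 0" using chi'_eq[OF hj] chiH[OF hj(1)] w0 by simp
  next
    fix a b assume "a \<in> H'" "b \<in> H'"
    then obtain h j h2 j2 where hj: "h \<in> H" "[a = h * x ^ j] (mod int M)" "h2 \<in> H" "[b = h2 * x ^ j2] (mod int M)"
      unfolding H'_def by blast
    have c: "[a * b = (h * h2) * x ^ (j + j2)] (mod int M)"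
      using cong_mult[OF hj(2) hj(4)] by (simp add: power_add ac_simps)
    have hh: "h * h2 \<in> H" using sgmul[OF sg hj(1) hj(3)] .
    show "a * b \<in> H'" unfolding H'_def using c hh by blast
    show "chi' (a * b) = chi' a * chi' b"
      using chi'_eq[OF hh c] chi'_eq[OF hj(1,2)] chi'_eq[OF hj(3,4)] sgchimul[OF sg hj(1) hj(3)]
      by (simp add: power_add)
    assume ab: "[a = b] (mod int M)"
    then have "[b = h * x ^ j] (mod int M)" using hj(2) by (meson cong_sym cong_trans)
    then show "chi' a = chi' b" using chi'_eq[OF hj(1,2)] chi'_eq[OF hj(1)] by simp
  next
    fix a b assume aH: "a \<in> H'" and ba: "[b = a] (mod int M)"
    obtain h j where hj: "h \<in> H" "[a = h * x ^ j] (mod int M)" using aH unfolding H'_def by blast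
    have "[b = h * x ^ j] (mod int M)" using cong_trans[OF ba hj(2)] .
    then show "b \<in> H'" unfolding H'_def using hj(1) by blast
  qed
  have "H \<subseteq> H'"
  proof
    fix a assume "a \<in> H"
    then show "a \<in> H'" unfolding H'_def by (intro CollectI bexI[of _ a] exI[of _ 0]) auto
  qed
  moreover have "x \<in> H'" unfolding H'_def using one by (intro CollectI bexI[of _ 1] exI[of _ 1]) auto
  moreover have "\<forall>a\<in>H. chi' a = chi a" using chi'_eq[of _ _ 0] by simp
  moreover have "chi' x = w" using chi'_eq[OF one, of x 1] sg_chi_one[OF sg] by simp
  ultimately show ?thesis using sub by blast
qed

lemma sg_ext: assumes sg0: "subgrp M H0 chi0" shows "\<exists>psi. dchar M psi \<and> (\<forall>a\<in>H0. psi a = chi0 a)"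
proof -
  have M: "M \<ge> 1" using sgM[OF sg0] .
  define S where "S H = {r \<in> {0..<int M}. coprime r (int M) \<and> r \<notin> H}" for H :: "int set"
  have finS: "finite (S H)" for H unfolding S_def by (rule finite_subset[of _ "{0..<int M}"]) auto
  have main: "\<forall>H chi. subgrp M H chi \<longrightarrow> card (S H) = n \<longrightarrow> (\<exists>psi. dchar M psi \<and> (\<forall>a\<in>H. psi a = chi a))" for n
  proof (induction n rule: less_induct)
    case (less n)
    show ?case
    proof (intro allI impI)
      fix H chi assume sg: "subgrp M H chi" and cn: "card (S H) = n"
      show "\<exists>psi. dchar M psi \<and> (\<forall>a\<in>H. psi a = chi a)"
      proof (cases "S H = {}")
        case True
        have allH: "y \<in> H" if yc: "coprime y (int M)" for y
        proof -
          have "y mod int M \<in> {0..<int M}" using M by simp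
          moreover have "coprime (y mod int M) (int M)" using yc M by simp
          ultimately have "y mod int M \<in> H" using True unfolding S_def by blast
          moreover have "[y = y mod int M] (mod int M)" by (simp add: cong_def)
          ultimately show ?thesis using sgcong[OF sg] by blast
        qed
        define psi where "psi y = (if coprime y (int M) then chi y else 0)" for y
        have "dchar M psi" unfolding dchar_def
        proof (intro conjI allI)
          show "M \<ge> 1" by (rule M)
        next
          fix a b
          show "psi (a * b) = psi a * psi b"
          proof (cases "coprime a (int M) \<and> coprime b (int M)")
            case True
            then show ?thesis unfolding psi_def using sgchimul[OF sg allH allH] by simp
          next
            case False
            then show ?thesis unfolding psi_def by auto
          qed
        next
          fix y
          have c: "[y + int M = y] (mod int M)" unfolding cong_iff_lin by (rule exI[of _ "-1"]) simp
          have cc: "coprime (y + int M) (int M) \<longleftrightarrow> coprime y (int M)" using coprime_cong_cong_left[OF c] .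
          show "psi (y + int M) = psi y"
          proof (cases "coprime y (int M)")
            case True
            then have "chi (y + int M) = chi y" using sgchicong[OF sg allH allH c] cc by simp
            then show ?thesis unfolding psi_def using cc by simp
          next
            case False then show ?thesis unfolding psi_def using cc by simp
          qed
        next
          fix y
          show "psi y = 0 \<longleftrightarrow> \<not> coprime y (int M)" unfolding psi_def using sgnz[OF sg allH] by auto
        qed
        moreover have "\<forall>a\<in>H. psi a = chi a" unfolding psi_def using sgcop[OF sg] by simp
        ultimately show ?thesis by blast
      next
        case False
        then obtain r where r: "r \<in> S H" by blast
        have rc: "coprime r (int M)" and rn: "r \<notin> H" using r unfolding S_def by auto
        define m where "m = (LEAST m. m > 0 \<and> r ^ m \<in> H)"
        obtain w where w: "w ^ m = chi (r ^ m)"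
        proof (cases "m = 0")
          case True
          then show ?thesis using that[of 1] sg_chi_one[OF sg] by simp
        next
          case False
          then show ?thesis using exists_complex_root[OF False, of "chi (r ^ m)"] that by metis
        qed
        obtain H' chi' where H': "subgrp M H' chi'" "H \<subseteq> H'" "r \<in> H'" "\<forall>a\<in>H. chi' a = chi a"
          using sg_step[OF sg rc rn m_def w] by blast
        have "S H' \<subseteq> S H - {r}" using H'(2,3) unfolding S_def by blast
        then have "S H' \<subset> S H" using r by blast
        then have "card (S H') < n" using cn finS psubset_card_mono by blast
        then obtain psi where ps: "dchar M psi" "\<forall>a\<in>H'. psi a = chi' a" using less H'(1) by blast
        have "\<forall>a\<in>H. psi a = chi a"
        proof
          fix a assume aH: "a \<in> H"
          then have "a \<in> H'" using H'(2) by blast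
          then have "psi a = chi' a" using ps(2) by blast
          also have "\<dots> = chi a" using H'(4) aH by blast
          finally show "psi a = chi a" .
        qed
        then show ?thesis using ps(1) by blast
      qed
    qed
  qed
  show ?thesis using main sg0 by blast
qed

lemma root_ne1: assumes "m \<ge> 2" shows "cis (2 * pi / real m) ^ m = 1" "cis (2 * pi / real m) \<noteq> 1"
proof -
  show "cis (2 * pi / real m) ^ m = 1" using assms by (simp add: Complex.DeMoivre)
  have m0: "m > 0" using assms by simp
  have inj: "inj_on (\<lambda>k. cis (2 * pi * real k / real m)) {..<m}"
    using Complex.bij_betw_roots_unity[OF m0] by (simp add: bij_betw_def)
  have "cis (2 * pi * real (1::nat) / real m) \<noteq> cis (2 * pi * real (0::nat) / real m)"
    using inj_onD[OF inj] assms by fastforce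
  then show "cis (2 * pi / real m) \<noteq> 1" by simp
qed

lemma char_sep:
  assumes M: "M \<ge> 1" and xc: "coprime x (int M)" and xn: "\<not> [x = 1] (mod int M)"
  shows "\<exists>psi. dchar M psi \<and> psi x \<noteq> 1"
proof -
  define H where "H = {y. [y = 1] (mod int M)}"
  define chi :: "int \<Rightarrow> complex" where "chi y = 1" for y
  have sg: "subgrp M H chi" unfolding subgrp_def
  proof (intro conjI ballI allI impI)
    show "M \<ge> 1" by (rule M)
    show "1 \<in> H" unfolding H_def by simp
  next
    fix a assume "a \<in> H"
    then have "[1 = a] (mod int M)" unfolding H_def by (simp add: cong_sym)
    then show "coprime a (int M)" using cong_imp_coprime[of 1 a "int M"] by simp
    show "chi a \<noteq> 0" unfolding chi_def by simp
  next
    fix a b assume "a \<in> H" "b \<in> H"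
    then show "a * b \<in> H" unfolding H_def using cong_mult[of a 1 "int M" b 1] by simp
    show "chi (a * b) = chi a * chi b" unfolding chi_def by simp
    show "chi a = chi b" unfolding chi_def by simp
  next
    fix a b assume "a \<in> H" "[b = a] (mod int M)"
    then show "b \<in> H" unfolding H_def using cong_trans by blast
  qed
  have xnH: "x \<notin> H" using xn unfolding H_def by simp
  define m where "m = (LEAST m. m > 0 \<and> x ^ m \<in> H)"
  have "[x ^ totient M = 1] (mod int M)" using euler_int[OF xc] .
  then have ex: "\<exists>m. m > 0 \<and> x ^ m \<in> H" unfolding H_def using totient_pos'[OF M] M by (intro exI[of _ "totient M"]) auto
  have mp: "m > 0" "x ^ m \<in> H" using LeastI_ex[OF ex] m_def by auto
  have "m \<noteq> 1" using mp(2) xnH by auto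
  then have m2: "m \<ge> 2" using mp(1) by simp
  define w where "w = cis (2 * pi / real m)"
  have w: "w ^ m = chi (x ^ m)" using root_ne1[OF m2] unfolding w_def chi_def by simp
  obtain H' chi' where H': "subgrp M H' chi'" "x \<in> H'" "chi' x = w"
    using sg_step[OF sg xc xnH m_def w] by blast
  obtain psi where "dchar M psi" "\<forall>a\<in>H'. psi a = chi' a" using sg_ext[OF H'(1)] by blast
  then show ?thesis using H'(2,3) root_ne1[OF m2] w_def by auto
qed

section \<open>Sums over characters\<close>

lemma dchar_prod_fun: assumes "dchar q a" "dchar q b" shows "dchar q (\<lambda>y. a y * b y)"
  using assms unfolding dchar_def by (auto simp: ac_simps)

lemma dchar_cnj_fun: assumes "dchar q a" shows "dchar q (\<lambda>y. cnj (a y))"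
  using assms unfolding dchar_def by auto

lemma dchar_values: assumes "dchar q chi" shows "chi y \<in> {z. z ^ totient q = 1} \<union> {0}"
proof (cases "coprime y (int q)")
  case True then show ?thesis using dchar_pow_tot[OF assms True] by simp
next
  case False then show ?thesis using dchar_zero_iff[OF assms] by simp
qed

lemma dchar_mod: assumes "dchar q chi" shows "chi y = chi (y mod int q)"
  using dchar_cong[OF assms, of y "y mod int q"] by (simp add: cong_def)

lemma dchar_finite: "finite {chi. dchar q chi}"
proof (cases "q \<ge> 1")
  case False
  then have "{chi. dchar q chi} = {}" by (auto simp: dchar_def)
  then show ?thesis by simp
next
  case True
  define V where "V = {z::complex. z ^ totient q = 1} \<union> {0}"
  have finV: "finite V" unfolding V_def using finite_roots_unity[of "totient q"] totient_pos'[OF True] by simp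
  define F where "F chi = restrict chi {0..<int q}" for chi :: "int \<Rightarrow> complex"
  have "F ` {chi. dchar q chi} \<subseteq> (\<Pi>\<^sub>E i\<in>{0..<int q}. V)"
  proof (rule image_subsetI)
    fix chi assume "chi \<in> {chi. dchar q chi}"
    then have d: "dchar q chi" by simp
    show "F chi \<in> (\<Pi>\<^sub>E i\<in>{0..<int q}. V)" unfolding F_def V_def using dchar_values[OF d]
      by (simp add: restrict_PiE_iff)
  qed
  moreover have "finite (\<Pi>\<^sub>E i\<in>{0..<int q}. V)" using finV by (intro finite_PiE) auto
  ultimately have fin: "finite (F ` {chi. dchar q chi})" using finite_subset by blast
  have "inj_on F {chi. dchar q chi}"
  proof (rule inj_onI)
    fix a b assume a: "a \<in> {chi. dchar q chi}" and b: "b \<in> {chi. dchar q chi}" and e: "F a = F b"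
    show "a = b"
    proof
      fix y
      have "y mod int q \<in> {0..<int q}" using True by simp
      then have "a (y mod int q) = b (y mod int q)" using e unfolding F_def by (metis restrict_apply')
      moreover have "dchar q a" "dchar q b" using a b by auto
      ultimately show "a y = b y" using dchar_mod[of q a y] dchar_mod[of q b y] by simp
    qed
  qed
  then show ?thesis using finite_imageD fin by blast
qed

lemma char_sum_zero:
  assumes q: "q \<ge> 1" and xc: "coprime x (int q)" and xn: "\<not> [x = 1] (mod int q)"
  shows "(\<Sum>chi\<in>{chi. dchar q chi}. chi x) = 0"
proof -
  obtain t0 where t0: "dchar q t0" "t0 x \<noteq> 1" using char_sep[OF q xc xn] by blast
  define X where "X = {chi. dchar q chi}"
  have bk1: "(\<lambda>y. (c y * t0 y) * cnj (t0 y)) = c" if c: "dchar q c" for c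
  proof
    fix y show "c y * t0 y * cnj (t0 y) = c y"
    proof (cases "coprime y (int q)")
      case True then show ?thesis using dchar_cnj_mult[OF t0(1) True] by (simp add: mult.assoc)
    next
      case False then show ?thesis using dchar_zero_iff[OF c] by simp
    qed
  qed
  have bk2: "(\<lambda>y. (c y * cnj (t0 y)) * t0 y) = c" if c: "dchar q c" for c
  proof
    fix y show "c y * cnj (t0 y) * t0 y = c y"
    proof (cases "coprime y (int q)")
      case True then show ?thesis using dchar_cnj_mult[OF t0(1) True] by (simp add: ac_simps)
    next
      case False then show ?thesis using dchar_zero_iff[OF c] by simp
    qed
  qed
  have "(\<Sum>chi\<in>X. chi x) = (\<Sum>chi\<in>X. chi x * t0 x)"
  proof (rule sum.reindex_bij_witness[where i="\<lambda>c y. c y * t0 y" and j="\<lambda>c y. c y * cnj (t0 y)"])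
    fix c assume "c \<in> X" then show "(\<lambda>y. c y * cnj (t0 y)) \<in> X"
      unfolding X_def using dchar_prod_fun dchar_cnj_fun t0(1) by blast
  next
    fix c assume "c \<in> X" then show "(\<lambda>y. c y * t0 y) \<in> X"
      unfolding X_def using dchar_prod_fun t0(1) by blast
  next
    fix c assume "c \<in> X" then show "(\<lambda>y. c y * cnj (t0 y) * t0 y) = c" using bk2 unfolding X_def by blast
  next
    fix c assume "c \<in> X" then show "(\<lambda>y. c y * t0 y * cnj (t0 y)) = c" using bk1 unfolding X_def by blast
  next
    fix c assume "c \<in> X"
    then have "dchar q c" unfolding X_def by simp
    from fun_cong[OF bk2[OF this], of x] show "c x * cnj (t0 x) * t0 x = c x" by simp
  qed
  also have "\<dots> = (\<Sum>chi\<in>X. chi x) * t0 x" by (simp add: sum_distrib_right)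
  finally have "(\<Sum>chi\<in>X. chi x) * (1 - t0 x) = 0" by (simp add: algebra_simps)
  then show ?thesis using t0(2) X_def by simp
qed

lemma coprime_dvd_r: "coprime (n::int) b \<Longrightarrow> a dvd b \<Longrightarrow> coprime n a"
  using coprime_divisors[of n n a b] by simp

lemma coprime_lcm_iff: "coprime (n::int) (int (lcm a b)) \<longleftrightarrow> coprime n (int a) \<and> coprime n (int b)"
proof
  assume "coprime n (int (lcm a b))"
  then show "coprime n (int a) \<and> coprime n (int b)"
    using coprime_dvd_r[of n "int (lcm a b)" "int a"] coprime_dvd_r[of n "int (lcm a b)" "int b"] by simp
next
  assume "coprime n (int a) \<and> coprime n (int b)"
  then have "coprime n (int a * int b)" by simp
  moreover have "lcm a b dvd a * b" by (rule lcm_least) simp_all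
  then have "int (lcm a b) dvd int (a * b)" by (simp only: int_dvd_int_iff)
  then have "int (lcm a b) dvd int a * int b" by simp
  ultimately show "coprime n (int (lcm a b))" using coprime_dvd_r by blast
qed

lemma dchar_two: assumes a: "dchar q1 a" and b: "dchar q2 b"
  shows "dchar (lcm q1 q2) (\<lambda>n. a n * cnj (b n))"
  unfolding dchar_def
proof (intro conjI allI)
  have "q1 \<ge> 1" "q2 \<ge> 1" using a b by (auto simp: dchar_def)
  then show "lcm q1 q2 \<ge> 1" by (simp add: Suc_le_eq lcm_pos_nat)
next
  fix m n show "a (m * n) * cnj (b (m * n)) = a m * cnj (b m) * (a n * cnj (b n))"
    using dchar_mult[OF a] dchar_mult[OF b] by simp
next
  fix n
  have "[n + int (lcm q1 q2) = n] (mod int (lcm q1 q2))" unfolding cong_iff_lin by (rule exI[of _ "-1"]) simp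
  moreover have "int q1 dvd int (lcm q1 q2)" "int q2 dvd int (lcm q1 q2)" by simp_all
  ultimately have c1: "[n + int (lcm q1 q2) = n] (mod int q1)" and c2: "[n + int (lcm q1 q2) = n] (mod int q2)"
    using cong_dvd_modulus by blast+
  show "a (n + int (lcm q1 q2)) * cnj (b (n + int (lcm q1 q2))) = a n * cnj (b n)"
    using dchar_cong[OF a c1] dchar_cong[OF b c2] by simp
next
  fix n
  show "(a n * cnj (b n) = 0) \<longleftrightarrow> \<not> coprime n (int (lcm q1 q2))"
    using dchar_zero_iff[OF a, of n] dchar_zero_iff[OF b, of n] coprime_lcm_iff by auto
qed

lemma dchar_liftN: assumes d: "dchar g th" and gN: "g dvd N" and N: "N \<ge> 1"
  shows "dchar N (\<lambda>n. if coprime n (int N) then th n else 0)"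
  unfolding dchar_def
proof (intro conjI allI)
  show "N \<ge> 1" by (rule N)
next
  fix m n show "(if coprime (m * n) (int N) then th (m * n) else 0) =
      (if coprime m (int N) then th m else 0) * (if coprime n (int N) then th n else 0)"
    using dchar_mult[OF d] by auto
next
  fix n
  have c: "[n + int N = n] (mod int N)" unfolding cong_iff_lin by (rule exI[of _ "-1"]) simp
  then have cc: "coprime (n + int N) (int N) \<longleftrightarrow> coprime n (int N)" by (rule coprime_cong_cong_left)
  have "int g dvd int N" using gN by simp
  then have "[n + int N = n] (mod int g)" using c cong_dvd_modulus by blast
  then have "th (n + int N) = th n" using dchar_cong[OF d] by blast
  then show "(if coprime (n + int N) (int N) then th (n + int N) else 0) = (if coprime n (int N) then th n else 0)"
    using cc by simp
next
  fix n
  have "coprime n (int N) \<Longrightarrow> coprime n (int g)" using gN coprime_dvd_r[of n "int N" "int g"] by simp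
  then show "((if coprime n (int N) then th n else 0) = 0) \<longleftrightarrow> \<not> coprime n (int N)"
    using dchar_zero_iff[OF d, of n] by auto
qed

lemma inv_of_unit: assumes "(a::complex) * b = 1" "a * c = 1" shows "b = c"
proof -
  have "b = b * (a * c)" using assms(2) by simp
  also have "\<dots> = (a * b) * c" by (simp add: ac_simps)
  also have "\<dots> = c" using assms(1) by simp
  finally show ?thesis .
qed

lemma dchar_cnj_pow: assumes d: "dchar q chi" and c: "coprime a (int q)"
  shows "cnj (chi a) = chi (a ^ (totient q - 1))"
proof -
  have q: "q \<ge> 1" using d by (simp add: dchar_def)
  have t: "totient q > 0" using totient_pos'[OF q] q by simp
  have "chi a * chi (a ^ (totient q - 1)) = chi a ^ totient q"
    using dchar_pow[OF d] power_minus_mult[OF t, of "chi a"] by (simp add: mult.commute)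
  also have "\<dots> = 1" using dchar_pow_tot[OF d c] .
  finally have "chi a * chi (a ^ (totient q - 1)) = 1" .
  then show ?thesis using inv_of_unit[OF dchar_cnj_mult[OF d c]] by blast
qed

lemma char_orth:
  assumes q: "q \<ge> 1" and a: "0 \<le> a" "a < int q" "coprime a (int q)" and r: "0 \<le> r" "r < int q" "coprime r (int q)"
  shows "(\<Sum>chi\<in>{chi. dchar q chi}. cnj (chi a) * chi r) = (if a = r then of_nat (card {chi. dchar q chi}) else 0)"
proof -
  define t where "t = totient q"
  have t: "t > 0" using totient_pos'[OF q] t_def q by simp
  define ai where "ai = a ^ (t - 1)"
  have aa: "[a * ai = 1] (mod int q)" unfolding ai_def using euler_int[OF a(3)] power_minus_mult[OF t, of a] t_def
    by (simp add: mult.commute)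
  have e: "cnj (chi a) * chi r = chi (ai * r)" if "chi \<in> {chi. dchar q chi}" for chi
    using that dchar_cnj_pow[OF _ a(3), of chi] dchar_mult[of q chi] unfolding ai_def t_def by simp
  have "(\<Sum>chi\<in>{chi. dchar q chi}. cnj (chi a) * chi r) = (\<Sum>chi\<in>{chi. dchar q chi}. chi (ai * r))"
    using e by (rule sum.cong[OF refl])
  also have "\<dots> = (if a = r then of_nat (card {chi. dchar q chi}) else 0)"
  proof (cases "a = r")
    case True
    then have "[ai * r = 1] (mod int q)" using aa by (simp add: mult.commute)
    then have one: "chi (ai * r) = 1" if "chi \<in> {chi. dchar q chi}" for chi
      using that dchar_cong[of q chi] dchar_one[of q chi] by simp
    have "(\<Sum>chi\<in>{chi. dchar q chi}. chi (ai * r)) = (\<Sum>chi\<in>{chi. dchar q chi}. (1::complex))"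
      using one by (intro sum.cong) auto
    then show ?thesis using True by simp
  next
    case False
    have aic: "coprime ai (int q)" unfolding ai_def using a(3) by simp
    have "\<not> [ai * r = 1] (mod int q)"
    proof
      assume h: "[ai * r = 1] (mod int q)"
      have h1: "[a * (ai * r) = a] (mod int q)" using cong_scalar_left[OF h, of a] by simp
      have h2: "[a * (ai * r) = r] (mod int q)" using cong_scalar_right[OF aa, of r] by (simp add: mult.assoc)
      have "[r = a] (mod int q)" using cong_trans[OF cong_sym[OF h2] h1] .
      then have "r = a" using cong_less_imp_eq_int a r by blast
      then show False using False by simp
    qed
    moreover have "coprime (ai * r) (int q)" using aic r(3) by simp
    ultimately show ?thesis using char_sum_zero[OF q] False by simp
  qed
  finally show ?thesis .
qed

lemma char_expand:
  fixes phi :: "int \<Rightarrow> complex"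
  assumes q: "q \<ge> 1"
  shows "\<exists>c. \<forall>r. 0 \<le> r \<and> r < int q \<and> coprime r (int q) \<longrightarrow> phi r = (\<Sum>chi\<in>{chi. dchar q chi}. c chi * chi r)"
proof -
  define X where "X = {chi. dchar q chi}"
  define R where "R = {r \<in> {0..<int q}. coprime r (int q)}"
  have finX: "finite X" unfolding X_def by (rule dchar_finite)
  have finR: "finite R" unfolding R_def by (rule finite_subset[of _ "{0..<int q}"]) auto
  define p0 where "p0 = (\<lambda>y. if coprime y (int q) then (1::complex) else 0)"
  have "dchar q p0"
  proof -
    have "dchar q (\<lambda>y. if coprime y (int q) then (1::complex) else 0)" unfolding dchar_def
    proof (intro conjI allI)
      show "q \<ge> 1" by (rule q)
      fix m n show "(if coprime (m * n) (int q) then (1::complex) else 0) = (if coprime m (int q) then 1 else 0) * (if coprime n (int q) then 1 else 0)" by simp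
    next
      fix n
      have c: "[n + int q = n] (mod int q)" unfolding cong_iff_lin by (rule exI[of _ "-1"]) simp
      then have "coprime (n + int q) (int q) \<longleftrightarrow> coprime n (int q)" by (rule coprime_cong_cong_left)
      then show "(if coprime (n + int q) (int q) then (1::complex) else 0) = (if coprime n (int q) then 1 else 0)" by simp
    next
      fix n show "((if coprime n (int q) then (1::complex) else 0) = 0) \<longleftrightarrow> \<not> coprime n (int q)" by simp
    qed
    then show ?thesis by (simp add: p0_def)
  qed
  then have "X \<noteq> {}" unfolding X_def by blast
  then have cX: "card X > 0" using finX by (simp add: card_gt_0_iff)
  define c where "c chi = (\<Sum>a\<in>R. phi a * cnj (chi a)) / of_nat (card X)" for chi
  have "phi r = (\<Sum>chi\<in>X. c chi * chi r)" if r: "0 \<le> r" "r < int q" "coprime r (int q)" for r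
  proof -
    have "(\<Sum>chi\<in>X. c chi * chi r) = (\<Sum>chi\<in>X. \<Sum>a\<in>R. phi a * (cnj (chi a) * chi r)) / of_nat (card X)"
      unfolding c_def by (simp add: sum_divide_distrib sum_distrib_right mult.assoc)
    also have "\<dots> = (\<Sum>a\<in>R. phi a * (\<Sum>chi\<in>X. cnj (chi a) * chi r)) / of_nat (card X)"
      by (subst sum.swap) (simp add: sum_distrib_left)
    also have "(\<Sum>a\<in>R. phi a * (\<Sum>chi\<in>X. cnj (chi a) * chi r)) = (\<Sum>a\<in>R. if a = r then phi a * of_nat (card X) else 0)"
    proof (rule sum.cong[OF refl])
      fix a assume "a \<in> R"
      then have a: "0 \<le> a" "a < int q" "coprime a (int q)" unfolding R_def by auto
      show "phi a * (\<Sum>chi\<in>X. cnj (chi a) * chi r) = (if a = r then phi a * of_nat (card X) else 0)"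
        using char_orth[OF q a r] unfolding X_def by simp
    qed
    also have "\<dots> = phi r * of_nat (card X)"
    proof -
      have "r \<in> R" unfolding R_def using r by simp
      then show ?thesis using finR by (simp add: sum.delta')
    qed
    finally show ?thesis using cX by simp
  qed
  then show ?thesis unfolding X_def by blast
qed

lemma prim_of:
  assumes N: "N \<ge> 1" and d: "dchar N chi" and A: "A dvd N"
    and triv: "\<forall>n. coprime n (int N) \<and> [n = 1] (mod int A) \<longrightarrow> chi n = 1"
  shows "\<exists>q chip. q dvd A \<and> primitive_char q chip \<and> (\<forall>n. coprime n (int N) \<longrightarrow> chip n = chi n)"
proof -
  define P where "P d \<longleftrightarrow> (\<forall>n. coprime n (int N) \<and> [n = 1] (mod int d) \<longrightarrow> chi n = 1)" for d :: nat
  define q where "q = (LEAST d. d dvd A \<and> P d)"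
  have PA: "P A" unfolding P_def by (rule triv)
  have ex: "\<exists>d. d dvd A \<and> P d" using PA dvd_refl by blast
  have qA: "q dvd A" and Pq: "P q" using LeastI_ex[OF ex] unfolding q_def by auto
  have qmin: "q \<le> d" if "d dvd A" "P d" for d unfolding q_def using that by (simp add: Least_le)
  have A0: "A > 0"
  proof (rule ccontr)
    assume "\<not> A > 0" then have "A = 0" by simp
    then show False using A N by simp
  qed
  have q0: "q \<ge> 1" using qA A0 by (cases "q = 0") auto
  have qN: "q dvd N" using qA A by (rule dvd_trans)
  have qNi: "int q dvd int N" using qN by simp
  have F1: "chi n = chi n'" if n: "coprime n (int N)" "coprime n' (int N)" "[n = n'] (mod int q)" for n n'
  proof -
    define t where "t = totient N"
    have t: "t > 0" using totient_pos'[OF N] t_def N by simp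
    define iv where "iv = n' ^ (t - 1)"
    have ni: "[n' * iv = 1] (mod int N)" unfolding iv_def using euler_int[OF n(2)] power_minus_mult[OF t, of n'] t_def
      by (simp add: mult.commute)
    have "[n * iv = n' * iv] (mod int q)" using cong_scalar_right[OF n(3)] .
    moreover have "[n' * iv = 1] (mod int q)" using ni qNi by (rule cong_dvd_modulus)
    ultimately have "[n * iv = 1] (mod int q)" by (rule cong_trans)
    moreover have "coprime (n * iv) (int N)" unfolding iv_def using n by simp
    ultimately have c1: "chi (n * iv) = 1" using Pq unfolding P_def by blast
    have "[n * (n' * iv) = n] (mod int N)" using cong_scalar_left[OF ni, of n] by simp
    then have "chi n = chi (n * (n' * iv))" using dchar_cong[OF d cong_sym] by blast
    also have "\<dots> = chi (n * iv) * chi n'" using dchar_mult[OF d] by (simp add: ac_simps)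
    finally show ?thesis using c1 by simp
  qed
  define lift where "lift y = (SOME k. [k = y] (mod int q) \<and> coprime k (int N))" for y
  have liftp: "[lift y = y] (mod int q) \<and> coprime (lift y) (int N)" if "coprime y (int q)" for y
  proof -
    have "\<exists>k. [k = y] (mod int q) \<and> coprime k (int N)" using lift_coprime[of "int N" y "int q"] that N by simp
    then show ?thesis unfolding lift_def by (rule someI_ex)
  qed
  define chip where "chip y = (if coprime y (int q) then chi (lift y) else 0)" for y
  have cNq: "coprime y (int q)" if "coprime y (int N)" for y using coprime_dvd_r[OF that qNi] .
  have chip_eq: "chip y = chi y" if y: "coprime y (int N)" for y
  proof -
    have c: "coprime y (int q)" using cNq[OF y] .
    have l: "[lift y = y] (mod int q)" "coprime (lift y) (int N)" using liftp[OF c] by auto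
    have "chi (lift y) = chi y" using F1[OF l(2) y l(1)] .
    then show ?thesis unfolding chip_def using c by simp
  qed
  have dq: "dchar q chip" unfolding dchar_def
  proof (intro conjI allI)
    show "q \<ge> 1" by (rule q0)
  next
    fix m n
    show "chip (m * n) = chip m * chip n"
    proof (cases "coprime m (int q) \<and> coprime n (int q)")
      case True
      have lm: "[lift m = m] (mod int q)" "coprime (lift m) (int N)" using liftp True by auto
      have ln: "[lift n = n] (mod int q)" "coprime (lift n) (int N)" using liftp True by auto
      have mn: "coprime (m * n) (int q)" using True by simp
      have lmn: "[lift (m * n) = m * n] (mod int q)" "coprime (lift (m * n)) (int N)" using liftp[OF mn] by auto
      have "[lift (m * n) = lift m * lift n] (mod int q)" using cong_trans[OF lmn(1) cong_sym[OF cong_mult[OF lm(1) ln(1)]]] .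
      moreover have "coprime (lift m * lift n) (int N)" using lm(2) ln(2) by simp
      ultimately have "chi (lift (m * n)) = chi (lift m * lift n)" using F1[OF lmn(2)] by blast
      then show ?thesis unfolding chip_def using True mn dchar_mult[OF d] by simp
    next
      case False
      then show ?thesis unfolding chip_def by auto
    qed
  next
    fix n
    have c: "[n + int q = n] (mod int q)" unfolding cong_iff_lin by (rule exI[of _ "-1"]) simp
    have cc: "coprime (n + int q) (int q) \<longleftrightarrow> coprime n (int q)" using coprime_cong_cong_left[OF c] .
    show "chip (n + int q) = chip n"
    proof (cases "coprime n (int q)")
      case True
      then have t2: "coprime (n + int q) (int q)" using cc by simp
      have l1: "[lift (n + int q) = n + int q] (mod int q)" "coprime (lift (n + int q)) (int N)" using liftp[OF t2] by auto
      have l2: "[lift n = n] (mod int q)" "coprime (lift n) (int N)" using liftp[OF True] by auto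
      have "[lift (n + int q) = lift n] (mod int q)" using cong_trans[OF cong_trans[OF l1(1) c] cong_sym[OF l2(1)]] .
      then have "chi (lift (n + int q)) = chi (lift n)" using F1[OF l1(2) l2(2)] by blast
      then show ?thesis unfolding chip_def using True t2 by simp
    next
      case False then show ?thesis unfolding chip_def using cc by simp
    qed
  next
    fix n
    show "chip n = 0 \<longleftrightarrow> \<not> coprime n (int q)"
      unfolding chip_def using liftp dchar_zero_iff[OF d] cNq by auto
  qed
  have "primitive_char q chip" unfolding primitive_char_def
  proof (intro conjI allI impI)
    show "dchar q chip" by (rule dq)
  next
    fix d' assume dd: "d' dvd q \<and> d' < q"
    show "\<not> (\<forall>n. coprime n (int q) \<and> [n = 1] (mod int d') \<longrightarrow> chip n = 1)"
    proof
      assume h: "\<forall>n. coprime n (int q) \<and> [n = 1] (mod int d') \<longrightarrow> chip n = 1"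
      have "P d'" unfolding P_def
      proof (intro allI impI)
        fix n assume n: "coprime n (int N) \<and> [n = 1] (mod int d')"
        then have "chip n = 1" using h cNq by blast
        then show "chi n = 1" using chip_eq n by simp
      qed
      moreover have "d' dvd A" using dvd_trans[of d' q A] dd qA by blast
      ultimately have "q \<le> d'" using qmin by blast
      then show False using dd by simp
    qed
  qed
  then show ?thesis using qA chip_eq by blast
qed

section \<open>The twisting character\<close>

lemma cong1_lcm:
  fixes c :: int and A B Q :: nat
  assumes "[c = 1] (mod int A)" "[c = 1] (mod int B)" "Q dvd lcm A B"
  shows "[c = 1] (mod int Q)"
proof -
  have "int A dvd c - 1" "int B dvd c - 1" using assms(1,2) by (simp_all add: cong_iff_dvd_diff)
  then have "lcm (int A) (int B) dvd c - 1" by (rule lcm_least)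
  then have "int (lcm A B) dvd c - 1" by simp
  moreover have "int Q dvd int (lcm A B)" using assms(3) by simp
  ultimately have "int Q dvd c - 1" by (rule dvd_trans[rotated])
  then show ?thesis by (simp add: cong_iff_dvd_diff)
qed

lemma Nstar_dvd_lcm:
  fixes N f Nstar :: nat
  assumes N: "N \<ge> 1" and fN: "f dvd N" and NsN: "Nstar dvd N" and gc: "gcd f (N div f) dvd N div Nstar"
  shows "Nstar dvd lcm f (N div f)"
proof -
  define A where "A = N div f"
  have fA: "f * A = N" unfolding A_def using dvd_mult_div_cancel[OF fN] .
  obtain k where k: "N div Nstar = gcd f A * k" using gc unfolding A_def by blast
  have "N = Nstar * (N div Nstar)" using NsN by simp
  then have e1: "N = gcd f A * (Nstar * k)" using k by (simp add: ac_simps)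
  have "gcd f A * lcm f A = f * A" by simp
  then have h: "gcd f A * lcm f A = gcd f A * (Nstar * k)" using fA e1 by simp
  have "gcd f A \<noteq> 0" using fA N by (metis gcd_eq_0_iff mult_0 not_one_le_zero)
  then have "lcm f A = Nstar * k" using h mult_left_cancel by blast
  then show ?thesis unfolding A_def by simp
qed

lemma chiA_exists:
  assumes N: "N \<ge> 1" and psi: "dchar N psi" and cond: "induced_by N psi Nstar psis"
    and fN: "f dvd N" and gc: "gcd f (N div f) dvd N div Nstar"
  shows "\<exists>chi. dchar N chi \<and> (\<forall>n. coprime n (int N) \<and> [n = 1] (mod int (N div f)) \<longrightarrow> chi n = 1)
                 \<and> (\<forall>n. coprime n (int N) \<and> [n = 1] (mod int f) \<longrightarrow> chi n = psi n)"
proof -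
  define A where "A = N div f"
  define B where "B = f"
  have fA: "B * A = N" unfolding A_def B_def using dvd_mult_div_cancel[OF fN] .
  have AN: "int A dvd int N" "int B dvd int N" using fA by (metis dvd_triv_left dvd_triv_right of_nat_dvd_iff)+
  have ps: "primitive_char Nstar psis" "Nstar dvd N" "\<forall>n. psi n = (if coprime n (int N) then psis n else 0)"
    using cond unfolding induced_by_def by auto
  have dps: "dchar Nstar psis" using ps(1) unfolding primitive_char_def by blast
  have Nl: "Nstar dvd lcm A B" using Nstar_dvd_lcm[OF N fN ps(2) gc] unfolding A_def B_def by (simp add: lcm.commute)
  have psi1: "psi c = 1" if c: "coprime c (int N)" "[c = 1] (mod int A)" "[c = 1] (mod int B)" for c
  proof -
    have "[c = 1] (mod int Nstar)" using cong1_lcm[OF c(2,3) Nl] .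
    then have "psis c = 1" using dchar_cong[OF dps] dchar_one[OF dps] by simp
    then show ?thesis using ps(3) c(1) by simp
  qed
  define t where "t = totient N"
  have t: "t > 0" using totient_pos'[OF N] t_def N by simp
  have WD: "psi b = psi b'"
    if ab: "coprime a (int N)" "coprime b (int N)" "[a = 1] (mod int A)" "[b = 1] (mod int B)"
      and ab': "coprime a' (int N)" "coprime b' (int N)" "[a' = 1] (mod int A)" "[b' = 1] (mod int B)"
      and e: "[a * b = a' * b'] (mod int N)" for a b a' b'
  proof -
    define bi where "bi = b ^ (t - 1)"
    have bb: "[b * bi = 1] (mod int N)" unfolding bi_def using euler_int[OF ab(2)] power_minus_mult[OF t, of b] t_def
      by (simp add: mult.commute)
    define c where "c = b' * bi"
    have "[b * c = b' * (b * bi)] (mod int N)" unfolding c_def by (simp add: ac_simps)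
    moreover have "[b' * (b * bi) = b'] (mod int N)" using cong_scalar_left[OF bb, of b'] by simp
    ultimately have e1: "[b * c = b'] (mod int N)" by (rule cong_trans)
    have cc: "coprime c (int N)" unfolding c_def bi_def using ab(2) ab'(2) by simp
    have "psi b' = psi (b * c)" using dchar_cong[OF psi cong_sym[OF e1]] .
    also have "\<dots> = psi b * psi c" using dchar_mult[OF psi] .
    finally have pb: "psi b' = psi b * psi c" .
    have eA: "[a * b = a' * b'] (mod int A)" using cong_dvd_modulus[OF e AN(1)] .
    have "[a * b = 1 * b] (mod int A)" using cong_scalar_right[OF ab(3)] .
    moreover have "[a' * b' = 1 * b'] (mod int A)" using cong_scalar_right[OF ab'(3)] .
    ultimately have "[b = b'] (mod int A)" using eA by (metis cong_sym cong_trans mult_1)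
    then have "[c = b * bi] (mod int A)" unfolding c_def using cong_scalar_right cong_sym by blast
    moreover have "[b * bi = 1] (mod int A)" using cong_dvd_modulus[OF bb AN(1)] .
    ultimately have cA: "[c = 1] (mod int A)" by (rule cong_trans)
    have "[bi = 1 ^ (t - 1)] (mod int B)" unfolding bi_def using cong_pow[OF ab(4)] .
    then have "[bi = 1] (mod int B)" by simp
    then have cB: "[c = 1] (mod int B)" unfolding c_def using cong_mult[OF ab'(4)] by fastforce
    have "psi c = 1" using psi1[OF cc cA cB] .
    then show ?thesis using pb by simp
  qed
  define Rep where "Rep y p \<longleftrightarrow> coprime (fst p) (int N) \<and> coprime (snd p) (int N) \<and> [fst p = 1] (mod int A)
      \<and> [snd p = 1] (mod int B) \<and> [y = fst p * snd p] (mod int N)" for y p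
  define H where "H = {y. \<exists>p. Rep y p}"
  define chiH where "chiH y = psi (snd (SOME p. Rep y p))" for y
  have chiH_eq: "chiH y = psi (snd p)" if "Rep y p" for y p
  proof -
    have "Rep y (SOME p. Rep y p)" using that by (rule someI)
    then show ?thesis unfolding chiH_def using that WD unfolding Rep_def by (meson cong_sym cong_trans)
  qed
  have sg: "subgrp N H chiH" unfolding subgrp_def
  proof (intro conjI ballI allI impI)
    show "N \<ge> 1" by (rule N)
    have "Rep 1 (1, 1)" unfolding Rep_def by simp
    then show "1 \<in> H" unfolding H_def by blast
  next
    fix y assume "y \<in> H"
    then obtain p where p: "Rep y p" unfolding H_def by blast
    then have "coprime (fst p * snd p) (int N)" unfolding Rep_def by simp
    then show "coprime y (int N)" using p unfolding Rep_def by (meson cong_imp_coprime cong_sym)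
    show "chiH y \<noteq> 0" using chiH_eq[OF p] p dchar_zero_iff[OF psi] unfolding Rep_def by simp
  next
    fix x y assume "x \<in> H" "y \<in> H"
    then obtain p p' where p: "Rep x p" and p': "Rep y p'" unfolding H_def by blast
    have r: "Rep (x * y) (fst p * fst p', snd p * snd p')"
      using p p' unfolding Rep_def
      by (auto intro: cong_mult[where b=1 and d=1, simplified] simp: ac_simps dest: cong_mult)
    then show "x * y \<in> H" unfolding H_def by blast
    show "chiH (x * y) = chiH x * chiH y" using chiH_eq[OF r] chiH_eq[OF p] chiH_eq[OF p'] dchar_mult[OF psi] by simp
    assume "[x = y] (mod int N)"
    then have "Rep y p" using p unfolding Rep_def by (meson cong_sym cong_trans)
    then show "chiH x = chiH y" using chiH_eq p by simp
  next
    fix x y assume "x \<in> H" "[y = x] (mod int N)"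
    then obtain p where p: "Rep x p" unfolding H_def by blast
    then have "Rep y p" using \<open>[y = x] (mod int N)\<close> unfolding Rep_def by (meson cong_trans)
    then show "y \<in> H" unfolding H_def by blast
  qed
  obtain chi where chi: "dchar N chi" "\<forall>a\<in>H. chi a = chiH a" using sg_ext[OF sg] by blast
  have "chi n = 1" if n: "coprime n (int N)" "[n = 1] (mod int A)" for n
  proof -
    have r: "Rep n (n, 1)" unfolding Rep_def using n by simp
    then have "n \<in> H" unfolding H_def by blast
    then show ?thesis using chi(2) chiH_eq[OF r] dchar_one[OF psi] by simp
  qed
  moreover have "chi n = psi n" if n: "coprime n (int N)" "[n = 1] (mod int B)" for n
  proof -
    have r: "Rep n (1, n)" unfolding Rep_def using n by simp
    then have "n \<in> H" unfolding H_def by blast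
    then show ?thesis using chi(2) chiH_eq[OF r] by simp
  qed
  ultimately show ?thesis using chi(1) unfolding A_def B_def by blast
qed

lemma divN: assumes "f dvd (N::nat)" shows "N div f dvd N" "f * (N div f) = N"
proof -
  show e: "f * (N div f) = N" using dvd_mult_div_cancel[OF assms] .
  show "N div f dvd N" by (rule dvd_triv_right[of "N div f" f, unfolded e])
qed

lemma idx_unpack:
  assumes T: "(f, chi1, chi2) \<in> D_index N Nstar psi" and N: "N \<ge> 1"
  shows "f dvd N \<and> gcd f (N div f) dvd N div Nstar \<and> (\<exists>q1 q2. q1 dvd N div f \<and> q2 dvd f \<and>
      primitive_char q1 chi1 \<and> primitive_char q2 chi2 \<and> (\<forall>n. coprime n (int N) \<longrightarrow> chi1 n * cnj (chi2 n) = psi n))"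
proof -
  have fN: "f dvd N" and gc: "gcd f (N div f) dvd N div Nstar" using T unfolding D_index_def by auto
  obtain q1 q2 where q: "q1 dvd N div f" "q2 dvd f" "primitive_char q1 chi1" "primitive_char q2 chi2"
      "char_sim q1 q2 chi1 chi2 N psi" using T unfolding D_index_def by auto
  obtain c chis where cs: "induced_by (lcm q1 q2) (\<lambda>n. chi1 n * cnj (chi2 n)) c chis" "induced_by N psi c chis"
    using q(5) unfolding char_sim_def by blast
  have "q1 dvd N" using q(1) divN(1)[OF fN] by (rule dvd_trans)
  moreover have "q2 dvd N" using q(2) fN by (rule dvd_trans)
  ultimately have "lcm q1 q2 dvd N" by (rule lcm_least)
  then have LN: "int (lcm q1 q2) dvd int N" by simp
  have "chi1 n * cnj (chi2 n) = psi n" if n: "coprime n (int N)" for n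
  proof -
    have "coprime n (int (lcm q1 q2))" using coprime_dvd_r[OF n LN] .
    then have "chi1 n * cnj (chi2 n) = chis n" using cs(1) unfolding induced_by_def by metis
    also have "\<dots> = psi n" using cs(2) n unfolding induced_by_def by metis
    finally show ?thesis .
  qed
  then show ?thesis using fN gc q by blast
qed

lemma D_index_finite: assumes N: "N \<ge> 1" shows "finite (D_index N Nstar psi)"
proof -
  define U where "U = (\<Union>q\<in>{q. q dvd N}. {chi. dchar q chi})"
  have fU: "finite U" unfolding U_def using N by (intro finite_UN_I) (simp_all add: dchar_finite)
  have "D_index N Nstar psi \<subseteq> {f. f dvd N} \<times> (U \<times> U)"
  proof
    fix T assume T: "T \<in> D_index N Nstar psi"
    obtain f chi1 chi2 where Te: "T = (f, chi1, chi2)" by (cases T) auto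
    have u: "f dvd N \<and> gcd f (N div f) dvd N div Nstar \<and> (\<exists>q1 q2. q1 dvd N div f \<and> q2 dvd f \<and>
      primitive_char q1 chi1 \<and> primitive_char q2 chi2 \<and> (\<forall>n. coprime n (int N) \<longrightarrow> chi1 n * cnj (chi2 n) = psi n))"
      using idx_unpack[OF T[unfolded Te] N] .
    then obtain q1 q2 where q: "q1 dvd N div f" "q2 dvd f" "primitive_char q1 chi1" "primitive_char q2 chi2" by blast
    have fN: "f dvd N" using u by blast
    have "q1 dvd N" using q(1) divN(1)[OF fN] by (rule dvd_trans)
    moreover have "q2 dvd N" using q(2) fN by (rule dvd_trans)
    ultimately have "chi1 \<in> U" "chi2 \<in> U" unfolding U_def using q(3,4) by (auto simp: primitive_char_def)
    then show "T \<in> {f. f dvd N} \<times> (U \<times> U)" using Te fN by simp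
  qed
  moreover have "finite ({f. f dvd N} \<times> (U \<times> U))" using fU N by simp
  ultimately show ?thesis by (rule finite_subset)
qed

lemma make_triple:
  assumes N: "N \<ge> 1" and psi: "dchar N psi" and cond: "induced_by N psi Nstar psis"
    and fN: "f dvd N" and gc: "gcd f (N div f) dvd N div Nstar"
    and d1: "dchar N chi1"
    and t1: "\<forall>n. coprime n (int N) \<and> [n = 1] (mod int (N div f)) \<longrightarrow> chi1 n = 1"
    and t2: "\<forall>n. coprime n (int N) \<and> [n = 1] (mod int f) \<longrightarrow> chi1 n * cnj (psi n) = 1"
  shows "\<exists>p1 p2. (f, p1, p2) \<in> D_index N Nstar psi \<and> (\<forall>n. coprime n (int N) \<longrightarrow> p1 n = chi1 n)"
proof -
  have ps: "primitive_char Nstar psis" "Nstar dvd N" "\<forall>n. psi n = (if coprime n (int N) then psis n else 0)"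
    using cond unfolding induced_by_def by auto
  have dps: "dchar Nstar psis" using ps(1) unfolding primitive_char_def by blast
  define chi2 where "chi2 = (\<lambda>n. chi1 n * cnj (psi n))"
  have d2: "dchar N chi2" unfolding chi2_def using dchar_prod_fun[OF d1 dchar_cnj_fun[OF psi]] .
  obtain q1 p1 where P1: "q1 dvd N div f" "primitive_char q1 p1" "\<forall>n. coprime n (int N) \<longrightarrow> p1 n = chi1 n"
    using prim_of[OF N d1 divN(1)[OF fN] t1] by blast
  obtain q2 p2 where P2: "q2 dvd f" "primitive_char q2 p2" "\<forall>n. coprime n (int N) \<longrightarrow> p2 n = chi2 n"
    using prim_of[OF N d2 fN] t2 unfolding chi2_def by blast
  define L where "L = lcm q1 q2"
  define G where "G = (\<lambda>n. p1 n * cnj (p2 n))"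
  have dG: "dchar L G" unfolding L_def G_def
    using dchar_two P1(2) P2(2) unfolding primitive_char_def by blast
  have Geq: "G n = psis n" if n: "coprime n (int N)" for n
  proof -
    have "G n = chi1 n * cnj (chi1 n * cnj (psi n))" unfolding G_def using P1(3) P2(3) n chi2_def by simp
    also have "\<dots> = (chi1 n * cnj (chi1 n)) * psi n" by (simp add: ac_simps)
    also have "\<dots> = psi n" using dchar_cnj_mult[OF d1 n] by simp
    also have "\<dots> = psis n" using ps(3) n by simp
    finally show ?thesis .
  qed
  have Geq': "\<forall>n. coprime n (int N) \<longrightarrow> psis n = G n" using Geq by simp
  have N0: "N \<noteq> 0" using N by simp
  have NsL: "Nstar dvd L" using prim_dvd[OF ps(1) dG N0 Geq'] .
  have "induced_by L G Nstar psis" unfolding induced_by_def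
  proof (intro conjI allI)
    show "primitive_char Nstar psis" by (rule ps(1))
    show "Nstar dvd L" by (rule NsL)
  next
    fix n
    show "G n = (if coprime n (int L) then psis n else 0)"
    proof (cases "coprime n (int L)")
      case True
      obtain k where k: "[k = n] (mod int L)" "coprime k (int N)" using lift_coprime[of "int N" n "int L"] True N by auto
      have "G n = G k" using dchar_cong[OF dG cong_sym[OF k(1)]] .
      also have "\<dots> = psis k" using Geq[OF k(2)] .
      also have "\<dots> = psis n" using dchar_cong[OF dps cong_dvd_modulus[OF k(1)]] NsL by simp
      finally show ?thesis using True by simp
    next
      case False then show ?thesis using dchar_zero_iff[OF dG] by simp
    qed
  qed
  then have "char_sim q1 q2 p1 p2 N psi" unfolding char_sim_def using cond L_def G_def by blast
  then have "(f, p1, p2) \<in> D_index N Nstar psi" unfolding D_index_def using fN gc P1(1,2) P2(1,2) by blast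
  then show ?thesis using P1(3) by blast
qed

lemma cusp_iff: "(f, r) \<in> sing_cusps N Nstar \<longleftrightarrow> f dvd N \<and> gcd f (N div f) dvd N div Nstar \<and>
      r < gcd f (N div f) \<and> coprime r (gcd f (N div f))"
  unfolding sing_cusps_def by simp

lemma norm_prod_eq:
  fixes u v u' v' :: complex
  assumes "v * cnj v = 1" "u' * cnj u' = 1" "u * cnj v = u' * cnj v'"
  shows "u * cnj u' = v * cnj v'"
proof -
  have "u * cnj u' = (u * cnj v) * (v * cnj u')" using assms(1) by (simp add: ac_simps)
  also have "\<dots> = (u' * cnj v') * (v * cnj u')" using assms(3) by simp
  also have "\<dots> = (u' * cnj u') * (v * cnj v')" by (simp add: ac_simps)
  finally show ?thesis using assms(2) by simp
qed

section \<open>Orthogonality\<close>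

lemma D_orth:
  assumes N: "N \<ge> 1"
    and reps: "\<forall>(f, r)\<in>sing_cusps N Nstar.
                 [rep f r = int r] (mod int (gcd f (N div f))) \<and> coprime (rep f r) (int N)"
    and T: "(f, chi1, chi2) \<in> D_index N Nstar psi" and T': "(f, chi1', chi2') \<in> D_index N Nstar psi"
    and ne: "(chi1, chi2) \<noteq> (chi1', chi2')"
  shows "(\<Sum>r\<in>{r. (f, r) \<in> sing_cusps N Nstar}. chi1 (- rep f r) * cnj (chi1' (- rep f r))) = 0"
proof -
  have N0: "N \<noteq> 0" using N by simp
  have u: "f dvd N \<and> gcd f (N div f) dvd N div Nstar \<and> (\<exists>q1 q2. q1 dvd N div f \<and> q2 dvd f \<and>
      primitive_char q1 chi1 \<and> primitive_char q2 chi2 \<and> (\<forall>n. coprime n (int N) \<longrightarrow> chi1 n * cnj (chi2 n) = psi n))"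
    using idx_unpack[OF T N] .
  then obtain q1 q2 where q: "q1 dvd N div f" "q2 dvd f" "primitive_char q1 chi1" "primitive_char q2 chi2"
      and rel: "\<forall>n. coprime n (int N) \<longrightarrow> chi1 n * cnj (chi2 n) = psi n" by blast
  have fN: "f dvd N" and gc: "gcd f (N div f) dvd N div Nstar" using u by auto
  have u': "f dvd N \<and> gcd f (N div f) dvd N div Nstar \<and> (\<exists>q1 q2. q1 dvd N div f \<and> q2 dvd f \<and>
      primitive_char q1 chi1' \<and> primitive_char q2 chi2' \<and> (\<forall>n. coprime n (int N) \<longrightarrow> chi1' n * cnj (chi2' n) = psi n))"
    using idx_unpack[OF T' N] .
  then obtain q1' q2' where q': "q1' dvd N div f" "q2' dvd f" "primitive_char q1' chi1'" "primitive_char q2' chi2'"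
      and rel': "\<forall>n. coprime n (int N) \<longrightarrow> chi1' n * cnj (chi2' n) = psi n" by blast
  define A where "A = N div f"
  define g where "g = gcd f A"
  have fA: "f * A = N" unfolding A_def using divN(2)[OF fN] .
  have dd: "dchar q1 chi1" "dchar q2 chi2" "dchar q1' chi1'" "dchar q2' chi2'"
    using q q' unfolding primitive_char_def by auto
  have qA: "int q1 dvd int A" "int q1' dvd int A" "int q2 dvd int f" "int q2' dvd int f"
    using q q' unfolding A_def by simp_all
  have AN: "int A dvd int N" "int f dvd int N" using fA by (metis dvd_triv_left dvd_triv_right of_nat_dvd_iff)+
  have cq: "coprime n (int q1)" "coprime n (int q1')" "coprime n (int q2)" "coprime n (int q2')"
    if n: "coprime n (int N)" for n
    using coprime_dvd_r[OF n dvd_trans[OF qA(1) AN(1)]] coprime_dvd_r[OF n dvd_trans[OF qA(2) AN(1)]]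
      coprime_dvd_r[OF n dvd_trans[OF qA(3) AN(2)]] coprime_dvd_r[OF n dvd_trans[OF qA(4) AN(2)]] by auto
  have c1ne: "chi1 \<noteq> chi1'"
  proof
    assume e: "chi1 = chi1'"
    have "\<forall>n. coprime n (int N) \<longrightarrow> chi2 n = chi2' n"
    proof (intro allI impI)
      fix n assume n: "coprime n (int N)"
      have "chi1 n * cnj (chi2 n) = chi1 n * cnj (chi2' n)" using rel rel' n e by simp
      moreover have "chi1 n \<noteq> 0" using dchar_zero_iff[OF dd(1)] cq(1)[OF n] by simp
      ultimately have "cnj (chi2 n) = cnj (chi2' n)" by simp
      then show "chi2 n = chi2' n" by simp
    qed
    then have "chi2 = chi2'" using prim_unique[OF q(4) q'(4) N0] by blast
    then show False using e ne by simp
  qed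
  obtain m0 where m0: "coprime m0 (int N)" "chi1 m0 \<noteq> chi1' m0"
    using prim_unique[OF q(3) q'(3) N0] c1ne by blast
  define h where "h n = chi1 n * cnj (chi1' n)" for n
  have hm0: "h m0 \<noteq> 1"
  proof
    assume "h m0 = 1"
    then have "cnj (chi1' m0) * chi1 m0 = 1" unfolding h_def by (simp add: mult.commute)
    moreover have "cnj (chi1' m0) * chi1' m0 = 1" using dchar_cnj_mult[OF dd(3) cq(2)[OF m0(1)]] by (simp add: mult.commute)
    ultimately have "chi1 m0 = chi1' m0" by (rule inv_of_unit)
    then show False using m0(2) by simp
  qed
  have hmul: "h (a * b) = h a * h b" for a b unfolding h_def using dchar_mult[OF dd(1)] dchar_mult[OF dd(3)] by simp
  have halt: "h n = chi2 n * cnj (chi2' n)" if n: "coprime n (int N)" for n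
    unfolding h_def
  proof (rule norm_prod_eq)
    show "chi2 n * cnj (chi2 n) = 1" using dchar_cnj_mult[OF dd(2) cq(3)[OF n]] .
    show "chi1' n * cnj (chi1' n) = 1" using dchar_cnj_mult[OF dd(3) cq(2)[OF n]] .
    show "chi1 n * cnj (chi2 n) = chi1' n * cnj (chi2' n)" using rel rel' n by simp
  qed
  have hper: "h n = h n'" if n: "coprime n (int N)" "coprime n' (int N)" "[n = n'] (mod int g)" for n n'
  proof -
    have gg: "gcd (int A) (int f) = int g" unfolding g_def by (simp add: gcd.commute)
    obtain k where k: "[k = n] (mod int A)" "[k = n'] (mod int f)" using crt_gen[of n n' "int A" "int f"] n(3) gg by auto
    have "coprime n (int A)" using coprime_dvd_r[OF n(1) AN(1)] .
    then have kA: "coprime k (int A)" using k(1) cong_imp_coprime cong_sym by blast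
    have "coprime n' (int f)" using coprime_dvd_r[OF n(2) AN(2)] .
    then have kf: "coprime k (int f)" using k(2) cong_imp_coprime cong_sym by blast
    have kN: "coprime k (int N)" using kA kf fA[symmetric] by simp
    have "chi1 k = chi1 n" using dchar_cong[OF dd(1) cong_dvd_modulus[OF k(1) qA(1)]] .
    moreover have "chi1' k = chi1' n" using dchar_cong[OF dd(3) cong_dvd_modulus[OF k(1) qA(2)]] .
    ultimately have "h n = h k" unfolding h_def by simp
    also have "\<dots> = chi2 k * cnj (chi2' k)" using halt[OF kN] .
    also have "\<dots> = chi2 n' * cnj (chi2' n')"
      using dchar_cong[OF dd(2) cong_dvd_modulus[OF k(2) qA(3)]] dchar_cong[OF dd(4) cong_dvd_modulus[OF k(2) qA(4)]] by simp
    also have "\<dots> = h n'" using halt[OF n(2)] by simp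
    finally show ?thesis .
  qed
  define Rf where "Rf = {r. (f, r) \<in> sing_cusps N Nstar}"
  have Rfc: "r \<in> Rf \<longleftrightarrow> r < g \<and> coprime r g" for r unfolding Rf_def g_def A_def using cusp_iff fN gc by simp
  have "Rf \<subseteq> {..<g}" using Rfc by blast
  then have finR: "finite Rf" using finite_subset by blast
  have f0: "f \<noteq> 0" using fA N0 by auto
  have g0: "g > 0" unfolding g_def using f0 by simp
  have "g dvd N" unfolding g_def by (rule dvd_trans[OF gcd_dvd1 fN])
  then have gN: "int g dvd int N" by simp
  have m0g: "coprime m0 (int g)" using coprime_dvd_r[OF m0(1) gN] .
  define sig where "sig r = nat ((m0 * int r) mod int g)" for r
  have sig_int: "int (sig r) = (m0 * int r) mod int g" for r unfolding sig_def using g0 by simp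
  have sig_cong: "[int (sig r) = m0 * int r] (mod int g)" for r unfolding sig_int by (simp add: cong_def)
  have sigR: "sig r \<in> Rf" if r: "r \<in> Rf" for r
  proof -
    have "int (sig r) < int g" using sig_int[of r] g0 by simp
    then have "sig r < g" by simp
    moreover have "coprime (int r) (int g)" using r Rfc by simp
    then have "coprime (m0 * int r) (int g)" using m0g by simp
    then have "coprime (int (sig r)) (int g)" using sig_cong cong_imp_coprime cong_sym by blast
    then have "coprime (sig r) g" by simp
    ultimately show ?thesis using Rfc by simp
  qed
  have inj: "inj_on sig Rf"
  proof (rule inj_onI)
    fix r r' assume r: "r \<in> Rf" and r': "r' \<in> Rf" and e: "sig r = sig r'"
    have "[m0 * int r = m0 * int r'] (mod int g)"
      using cong_trans[OF cong_sym[OF sig_cong[of r]] sig_cong[of r', folded e]] .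
    then have "[int r = int r'] (mod int g)" using cong_mult_lcancel[OF m0g] by blast
    moreover have "int r < int g" "int r' < int g" using r r' Rfc by auto
    ultimately have "int r = int r'" using cong_less_imp_eq_int[of "int r" "int g" "int r'"] by simp
    then show "r = r'" by simp
  qed
  have img: "sig ` Rf = Rf"
  proof (rule card_subset_eq[OF finR])
    show "sig ` Rf \<subseteq> Rf" using sigR by blast
    show "card (sig ` Rf) = card Rf" using card_image[OF inj] .
  qed
  have key: "h (- rep f (sig r)) = h m0 * h (- rep f r)" if r: "r \<in> Rf" for r
  proof -
    have rs: "(f, sig r) \<in> sing_cusps N Nstar" "(f, r) \<in> sing_cusps N Nstar" using sigR[OF r] r unfolding Rf_def by auto
    have p1: "[rep f (sig r) = int (sig r)] (mod int g)" "coprime (rep f (sig r)) (int N)"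
      using reps rs(1) unfolding g_def A_def by auto
    have p2: "[rep f r = int r] (mod int g)" "coprime (rep f r) (int N)"
      using reps rs(2) unfolding g_def A_def by auto
    have "[rep f (sig r) = m0 * int r] (mod int g)" using cong_trans[OF p1(1) sig_cong] .
    then have c1: "[- rep f (sig r) = - (m0 * int r)] (mod int g)" by (simp add: cong_minus_minus_iff)
    have "[m0 * rep f r = m0 * int r] (mod int g)" using cong_scalar_left[OF p2(1)] .
    then have c2: "[m0 * (- rep f r) = - (m0 * int r)] (mod int g)" by (simp add: cong_minus_minus_iff)
    have c3: "[- rep f (sig r) = m0 * (- rep f r)] (mod int g)" using cong_trans[OF c1 cong_sym[OF c2]] .
    have "h (- rep f (sig r)) = h (m0 * (- rep f r))"
      using hper[OF _ _ c3] p1(2) p2(2) m0(1) by simp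
    also have "\<dots> = h m0 * h (- rep f r)" by (rule hmul)
    finally show ?thesis .
  qed
  define S where "S = (\<Sum>r\<in>Rf. h (- rep f r))"
  have "S = (\<Sum>r\<in>sig ` Rf. h (- rep f r))" unfolding S_def img ..
  also have "\<dots> = (\<Sum>r\<in>Rf. h (- rep f (sig r)))" using sum.reindex[OF inj] by simp
  also have "\<dots> = (\<Sum>r\<in>Rf. h m0 * h (- rep f r))" using key by (rule sum.cong[OF refl])
  also have "\<dots> = h m0 * S" unfolding S_def by (simp add: sum_distrib_left)
  finally have "S * (1 - h m0) = 0" by (simp add: algebra_simps)
  then have "S = 0" using hm0 by simp
  then show ?thesis unfolding S_def h_def Rf_def .
qed

section \<open>Spanning\<close>

lemma D_span:
  fixes phi :: "nat \<Rightarrow> complex"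
  assumes N: "N \<ge> 1" and psi: "dchar N psi" and cond: "induced_by N psi Nstar psis"
    and reps: "\<forall>(f, r)\<in>sing_cusps N Nstar.
                 [rep f r = int r] (mod int (gcd f (N div f))) \<and> coprime (rep f r) (int N)"
    and fN: "f dvd N" and gc: "gcd f (N div f) dvd N div Nstar"
  shows "\<exists>\<beta>. \<forall>r. (f, r) \<in> sing_cusps N Nstar \<longrightarrow>
           phi r = (\<Sum>T\<in>{T \<in> D_index N Nstar psi. fst T = f}. \<beta> T * fst (snd T) (- rep f r))"
proof -
  obtain chiA where cA: "dchar N chiA" "\<forall>n. coprime n (int N) \<and> [n = 1] (mod int (N div f)) \<longrightarrow> chiA n = 1"
      "\<forall>n. coprime n (int N) \<and> [n = 1] (mod int f) \<longrightarrow> chiA n = psi n"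
    using chiA_exists[OF N psi cond fN gc] by blast
  define A where "A = N div f"
  define g where "g = gcd f A"
  have fA: "f * A = N" unfolding A_def using divN(2)[OF fN] .
  have f0: "f \<noteq> 0" using fA N by auto
  have g1: "g \<ge> 1" unfolding g_def using f0 by (simp add: Suc_le_eq)
  have gA: "int g dvd int A" "int g dvd int f" unfolding g_def by simp_all
  have gN: "g dvd N" unfolding g_def by (rule dvd_trans[OF gcd_dvd1 fN])
  define X where "X = {th. dchar g th}"
  have finX: "finite X" unfolding X_def by (rule dchar_finite)
  define chi1 where "chi1 th = (\<lambda>n. chiA n * (if coprime n (int N) then th n else 0))" for th :: "int \<Rightarrow> complex"
  define Ix where "Ix = {T \<in> D_index N Nstar psi. fst T = f}"
  have finIx: "finite Ix" unfolding Ix_def using D_index_finite[OF N] by simp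
  have exT: "\<exists>T. T \<in> Ix \<and> (\<forall>n. coprime n (int N) \<longrightarrow> fst (snd T) n = chi1 th n)" if th: "th \<in> X" for th
  proof -
    have dth: "dchar g th" using th unfolding X_def by simp
    have dN: "dchar N (chi1 th)" unfolding chi1_def using dchar_prod_fun[OF cA(1) dchar_liftN[OF dth gN N]] .
    have th1: "th n = 1" if "[n = 1] (mod int g)" for n using dchar_cong[OF dth that] dchar_one[OF dth] by simp
    have t1: "\<forall>n. coprime n (int N) \<and> [n = 1] (mod int (N div f)) \<longrightarrow> chi1 th n = 1"
    proof (intro allI impI)
      fix n assume n: "coprime n (int N) \<and> [n = 1] (mod int (N div f))"
      then have "[n = 1] (mod int g)" using cong_dvd_modulus gA(1) unfolding A_def by blast
      then show "chi1 th n = 1" unfolding chi1_def using n cA(2) th1 by simp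
    qed
    have t2: "\<forall>n. coprime n (int N) \<and> [n = 1] (mod int f) \<longrightarrow> chi1 th n * cnj (psi n) = 1"
    proof (intro allI impI)
      fix n assume n: "coprime n (int N) \<and> [n = 1] (mod int f)"
      then have "[n = 1] (mod int g)" using cong_dvd_modulus gA(2) by blast
      then have "chi1 th n = psi n" unfolding chi1_def using n cA(3) th1 by simp
      then show "chi1 th n * cnj (psi n) = 1" using dchar_cnj_mult[OF psi] n by simp
    qed
    obtain p1 p2 where "(f, p1, p2) \<in> D_index N Nstar psi" "\<forall>n. coprime n (int N) \<longrightarrow> p1 n = chi1 th n"
      using make_triple[OF N psi cond fN gc dN t1 t2] by blast
    then show ?thesis unfolding Ix_def by (intro exI[of _ "(f, p1, p2)"]) simp
  qed
  define Tt where "Tt th = (SOME T. T \<in> Ix \<and> (\<forall>n. coprime n (int N) \<longrightarrow> fst (snd T) n = chi1 th n))" for th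
  have Tt: "Tt th \<in> Ix \<and> (\<forall>n. coprime n (int N) \<longrightarrow> fst (snd (Tt th)) n = chi1 th n)" if "th \<in> X" for th
    unfolding Tt_def using exT[OF that] by (rule someI_ex)
  define phi' where "phi' x = phi (nat x) / chiA (- rep f (nat x))" for x
  obtain c where c: "\<forall>x. 0 \<le> x \<and> x < int g \<and> coprime x (int g) \<longrightarrow> phi' x = (\<Sum>th\<in>X. c th * th x)"
    using char_expand[OF g1, of phi'] unfolding X_def by blast
  define gam where "gam th = c th * th (-1)" for th
  define \<beta> where "\<beta> T = (\<Sum>th\<in>{th \<in> X. Tt th = T}. gam th)" for T
  have "phi r = (\<Sum>T\<in>Ix. \<beta> T * fst (snd T) (- rep f r))" if r: "(f, r) \<in> sing_cusps N Nstar" for r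
  proof -
    have rg: "r < g" "coprime r g" using r cusp_iff unfolding g_def A_def by auto
    have rp: "[rep f r = int r] (mod int g)" "coprime (rep f r) (int N)" using reps r unfolding g_def A_def by auto
    have mc: "coprime (- rep f r) (int N)" using rp(2) by simp
    have a0: "chiA (- rep f r) \<noteq> 0" using dchar_zero_iff[OF cA(1)] mc by simp
    have "phi r = chiA (- rep f r) * phi' (int r)" unfolding phi'_def using a0 by simp
    also have "phi' (int r) = (\<Sum>th\<in>X. c th * th (int r))" using c rg by simp
    finally have e1: "phi r = (\<Sum>th\<in>X. chiA (- rep f r) * (c th * th (int r)))" by (simp add: sum_distrib_left)
    have e2: "chiA (- rep f r) * (c th * th (int r)) = gam th * fst (snd (Tt th)) (- rep f r)" if th: "th \<in> X" for th
    proof -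
      have dth: "dchar g th" using th unfolding X_def by simp
      have "th (- rep f r) = th (-1) * th (rep f r)" using dchar_mult[OF dth, of "-1" "rep f r"] by simp
      also have "th (rep f r) = th (int r)" using dchar_cong[OF dth rp(1)] .
      finally have e: "th (- rep f r) = th (-1) * th (int r)" .
      have "th (-1) * th (-1) = 1" using dchar_mult[OF dth, of "-1" "-1"] dchar_one[OF dth] by simp
      then have "th (int r) = th (-1) * th (- rep f r)" using e by (simp add: mult.assoc[symmetric])
      moreover have "fst (snd (Tt th)) (- rep f r) = chiA (- rep f r) * th (- rep f r)"
        using Tt[OF th] mc unfolding chi1_def by simp
      ultimately show ?thesis unfolding gam_def by (simp add: ac_simps)
    qed
    have "phi r = (\<Sum>th\<in>X. gam th * fst (snd (Tt th)) (- rep f r))" using e1 e2 by simp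
    also have "\<dots> = (\<Sum>T\<in>Ix. \<Sum>th\<in>{th \<in> X. Tt th = T}. gam th * fst (snd (Tt th)) (- rep f r))"
    proof (rule sum.group[symmetric, OF finX finIx])
      show "Tt ` X \<subseteq> Ix" using Tt by blast
    qed
    also have "\<dots> = (\<Sum>T\<in>Ix. \<beta> T * fst (snd T) (- rep f r))"
    proof (rule sum.cong[OF refl])
      fix T assume "T \<in> Ix"
      have "(\<Sum>th\<in>{th \<in> X. Tt th = T}. gam th * fst (snd (Tt th)) (- rep f r)) =
            (\<Sum>th\<in>{th \<in> X. Tt th = T}. gam th * fst (snd T) (- rep f r))" by (rule sum.cong) auto
      also have "\<dots> = \<beta> T * fst (snd T) (- rep f r)" unfolding \<beta>_def by (simp add: sum_distrib_right)
      finally show "(\<Sum>th\<in>{th \<in> X. Tt th = T}. gam th * fst (snd (Tt th)) (- rep f r)) = \<beta> T * fst (snd T) (- rep f r)" .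
    qed
    finally show ?thesis .
  qed
  then show ?thesis unfolding Ix_def by blast
qed

lemma sum_fiber:
  assumes fin: "finite C"
  shows "(\<Sum>c\<in>C. if fst c = f then G (snd c) else 0) = (\<Sum>r\<in>{r. (f, r) \<in> C}. G r)"
proof -
  have "(\<Sum>c\<in>C. if fst c = f then G (snd c) else 0) = (\<Sum>c\<in>{c \<in> C. fst c = f}. G (snd c))"
    using sum.inter_filter[OF fin, of "\<lambda>c. G (snd c)" "\<lambda>c. fst c = f"] by simp
  also have "{c \<in> C. fst c = f} = (\<lambda>r. (f, r)) ` {r. (f, r) \<in> C}" by force
  also have "(\<Sum>c\<in>(\<lambda>r. (f, r)) ` {r. (f, r) \<in> C}. G (snd c)) = (\<Sum>r\<in>{r. (f, r) \<in> C}. G r)"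
    by (subst sum.reindex) (auto simp: inj_on_def)
  finally show ?thesis .
qed

lemma coeff_unique:
  assumes indep: "lin_indep_family C E" and F: "\<forall>z\<in>upper_half. F z = (\<Sum>c\<in>C. a c * E c z)"
  shows "\<forall>c\<in>C. eis_coeffs C E F c = a c"
proof -
  define b where "b = eis_coeffs C E F"
  have "\<exists>a. \<forall>z\<in>upper_half. F z = (\<Sum>c\<in>C. a c * E c z)" using F by blast
  then have b: "\<forall>z\<in>upper_half. F z = (\<Sum>c\<in>C. b c * E c z)" unfolding b_def eis_coeffs_def by (rule someI_ex)
  have zero: "\<forall>z\<in>upper_half. (\<Sum>c\<in>C. (b c - a c) * E c z) = 0"
  proof
    fix z assume z: "z \<in> upper_half"
    have "(\<Sum>c\<in>C. (b c - a c) * E c z) = (\<Sum>c\<in>C. b c * E c z) - (\<Sum>c\<in>C. a c * E c z)"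
      by (simp add: left_diff_distrib sum_subtractf)
    also have "\<dots> = 0" using b F z by simp
    finally show "(\<Sum>c\<in>C. (b c - a c) * E c z) = 0" .
  qed
  have imp: "(\<forall>z\<in>upper_half. (\<Sum>c\<in>C. (b c - a c) * E c z) = 0) \<longrightarrow> (\<forall>c\<in>C. b c - a c = 0)"
    using spec[OF indep[unfolded lin_indep_family_def], of "\<lambda>c. b c - a c"] by simp
  have "\<forall>c\<in>C. b c - a c = 0" using imp zero by blast
  then show ?thesis unfolding b_def by simp
qed

lemma sing_cusps_finite: assumes N: "N \<ge> 1" shows "finite (sing_cusps N Nstar)"
proof -
  have "sing_cusps N Nstar \<subseteq> {..N} \<times> {..N}"
  proof
    fix c assume c: "c \<in> sing_cusps N Nstar"
    obtain f r where ce: "c = (f, r)" by (cases c) auto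
    have h: "f dvd N" "r < gcd f (N div f)" using c ce cusp_iff by auto
    have fle: "f \<le> N" using dvd_imp_le[OF h(1)] N by simp
    have "f \<noteq> 0" using h(1) N by (cases "f = 0") auto
    then have "gcd f (N div f) \<le> f" by (simp add: dvd_imp_le)
    then show "c \<in> {..N} \<times> {..N}" using ce fle h(2) by simp
  qed
  then show ?thesis using finite_subset by blast
qed

theorem theorem8p1:
  fixes N Nstar :: nat and k :: int and psi psis :: "int \<Rightarrow> complex"
    and rep :: "nat \<Rightarrow> nat \<Rightarrow> int"
    and E :: "nat \<times> nat \<Rightarrow> complex \<Rightarrow> complex"
  assumes N: "N \<ge> 1"
    and psi_char: "dchar N psi"
    and parity: "psi (-1) = (if even k then 1 else -1)"
    and conductor: "induced_by N psi Nstar psis"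
    and reps: "\<forall>(f, r)\<in>sing_cusps N Nstar.
                 [rep f r = int r] (mod int (gcd f (N div f))) \<and> coprime (rep f r) (int N)"
    and indep: "lin_indep_family (sing_cusps N Nstar) E"
  shows "finite (D_index N Nstar psi)
    \<and> (\<forall>(f, chi1, chi2)\<in>D_index N Nstar psi.
          D_series N Nstar rep E f chi1 \<in> eis_span (sing_cusps N Nstar) E)
    \<and> (\<forall>(f, chi1, chi2)\<in>D_index N Nstar psi. \<forall>(f', chi1', chi2')\<in>D_index N Nstar psi.
          (f, chi1, chi2) \<noteq> (f', chi1', chi2') \<longrightarrow>
          formal_inner (sing_cusps N Nstar) E
             (D_series N Nstar rep E f chi1) (D_series N Nstar rep E f' chi1') = 0)
    \<and> (\<forall>(f, chi1, chi2)\<in>D_index N Nstar psi.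
          formal_inner (sing_cusps N Nstar) E
             (D_series N Nstar rep E f chi1) (D_series N Nstar rep E f chi1) \<noteq> 0)
    \<and> (\<forall>F\<in>eis_span (sing_cusps N Nstar) E. \<exists>b.
          \<forall>z\<in>upper_half. F z = (\<Sum>(f, chi1, chi2)\<in>D_index N Nstar psi.
                                   b (f, chi1, chi2) * D_series N Nstar rep E f chi1 z))"
proof -
  define C where "C = sing_cusps N Nstar"
  define Ix where "Ix = D_index N Nstar psi"
  have finC: "finite C" unfolding C_def using sing_cusps_finite[OF N] .
  define coef where "coef f chi1 c = (if fst c = f then chi1 (- rep f (snd c)) else 0)"
    for f and chi1 :: "int \<Rightarrow> complex" and c :: "nat \<times> nat"
  have Dser: "D_series N Nstar rep E f chi1 z = (\<Sum>c\<in>C. coef f chi1 c * E c z)" for f chi1 z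
  proof -
    have "(\<Sum>c\<in>C. coef f chi1 c * E c z) = (\<Sum>c\<in>C. if fst c = f then chi1 (- rep f (snd c)) * E (f, snd c) z else 0)"
      unfolding coef_def by (rule sum.cong) auto
    also have "\<dots> = (\<Sum>r\<in>{r. (f, r) \<in> C}. chi1 (- rep f r) * E (f, r) z)"
      using sum_fiber[OF finC, of f "\<lambda>r. chi1 (- rep f r) * E (f, r) z"] by simp
    finally show ?thesis unfolding D_series_def C_def by simp
  qed
  have span: "D_series N Nstar rep E f chi1 \<in> eis_span C E" for f chi1
    unfolding eis_span_def using Dser by blast
  have coeffs: "\<forall>c\<in>C. eis_coeffs C E (D_series N Nstar rep E f chi1) c = coef f chi1 c" for f chi1
    using coeff_unique[of C E "D_series N Nstar rep E f chi1" "coef f chi1"] indep Dser unfolding C_def by blast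
  have inner: "formal_inner C E (D_series N Nstar rep E f chi1) (D_series N Nstar rep E f' chi1') =
      4 * of_real pi * (\<Sum>c\<in>C. coef f chi1 c * cnj (coef f' chi1' c))" for f chi1 f' chi1'
    unfolding formal_inner_def using coeffs[of f chi1] coeffs[of f' chi1'] by (intro arg_cong[where f="\<lambda>x. 4 * of_real pi * x"] sum.cong) auto
  have P3: "formal_inner C E (D_series N Nstar rep E f chi1) (D_series N Nstar rep E f' chi1') = 0"
    if T: "(f, chi1, chi2) \<in> Ix" and T': "(f', chi1', chi2') \<in> Ix" and ne: "(f, chi1, chi2) \<noteq> (f', chi1', chi2')"
    for f chi1 chi2 f' chi1' chi2'
  proof (cases "f = f'")
    case False
    have "(\<Sum>c\<in>C. coef f chi1 c * cnj (coef f' chi1' c)) = 0"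
      using False unfolding coef_def by (intro sum.neutral) auto
    then show ?thesis using inner by simp
  next
    case True
    have "(\<Sum>c\<in>C. coef f chi1 c * cnj (coef f' chi1' c)) =
        (\<Sum>c\<in>C. if fst c = f then chi1 (- rep f (snd c)) * cnj (chi1' (- rep f (snd c))) else 0)"
      unfolding coef_def using True by (intro sum.cong) auto
    also have "\<dots> = (\<Sum>r\<in>{r. (f, r) \<in> C}. chi1 (- rep f r) * cnj (chi1' (- rep f r)))"
      by (rule sum_fiber[OF finC])
    also have "\<dots> = 0" unfolding C_def
      using D_orth[OF N reps, of f chi1 chi2 psi chi1' chi2'] T T' ne True unfolding Ix_def by auto
    finally show ?thesis using inner by simp
  qed
  have P4: "formal_inner C E (D_series N Nstar rep E f chi1) (D_series N Nstar rep E f chi1) \<noteq> 0"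
    if T: "(f, chi1, chi2) \<in> Ix" for f chi1 chi2
  proof -
    have u: "f dvd N \<and> gcd f (N div f) dvd N div Nstar \<and> (\<exists>q1 q2. q1 dvd N div f \<and> q2 dvd f \<and>
      primitive_char q1 chi1 \<and> primitive_char q2 chi2 \<and> (\<forall>n. coprime n (int N) \<longrightarrow> chi1 n * cnj (chi2 n) = psi n))"
      using idx_unpack[OF T[unfolded Ix_def] N] .
    then obtain q1 where q1: "q1 dvd N div f" "primitive_char q1 chi1" by blast
    have fN: "f dvd N" and gc: "gcd f (N div f) dvd N div Nstar" using u by auto
    have d1: "dchar q1 chi1" using q1(2) unfolding primitive_char_def by blast
    have q1N: "int q1 dvd int N" using dvd_trans[OF q1(1) divN(1)[OF fN]] by simp
    define Rf where "Rf = {r. (f, r) \<in> C}"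
    have one: "chi1 (- rep f r) * cnj (chi1 (- rep f r)) = 1" if r: "r \<in> Rf" for r
    proof -
      have "coprime (rep f r) (int N)" using reps r unfolding Rf_def C_def by auto
      then have "coprime (- rep f r) (int q1)" using coprime_dvd_r q1N by simp
      then show ?thesis using dchar_cnj_mult[OF d1] by blast
    qed
    have "(\<Sum>c\<in>C. coef f chi1 c * cnj (coef f chi1 c)) =
        (\<Sum>c\<in>C. if fst c = f then chi1 (- rep f (snd c)) * cnj (chi1 (- rep f (snd c))) else 0)"
      unfolding coef_def by (intro sum.cong) auto
    also have "\<dots> = (\<Sum>r\<in>Rf. chi1 (- rep f r) * cnj (chi1 (- rep f r)))"
      unfolding Rf_def by (rule sum_fiber[OF finC])
    also have "\<dots> = (\<Sum>r\<in>Rf. (1::complex))" using one by (rule sum.cong[OF refl])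
    also have "\<dots> = of_nat (card Rf)" by simp
    finally have s: "(\<Sum>c\<in>C. coef f chi1 c * cnj (coef f chi1 c)) = of_nat (card Rf)" .
    define g where "g = gcd f (N div f)"
    have "f \<noteq> 0" using fN N by (cases "f = 0") auto
    then have g1: "g \<ge> 1" unfolding g_def by (simp add: Suc_le_eq)
    define r0 where "r0 = (if g = 1 then 0 else (1::nat))"
    have "r0 < g \<and> coprime r0 g" unfolding r0_def using g1 by auto
    then have "r0 \<in> Rf" unfolding Rf_def C_def using cusp_iff fN gc g_def by simp
    moreover have "finite Rf" unfolding Rf_def using finC
      by (rule finite_subset[rotated, OF finite_imageI[of C snd]]) force
    ultimately have "card Rf > 0" by (simp add: card_gt_0_iff) blast
    then show ?thesis using inner s by simp
  qed
  have P5: "\<exists>b. \<forall>z\<in>upper_half. F z = (\<Sum>T\<in>Ix. b T * D_series N Nstar rep E (fst T) (fst (snd T)) z)"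
    if F: "F \<in> eis_span C E" for F
  proof -
    from F have "\<exists>a. \<forall>z\<in>upper_half. F z = (\<Sum>c\<in>C. a c * E c z)" unfolding eis_span_def by (rule CollectD)
    then obtain a where a: "\<forall>z\<in>upper_half. F z = (\<Sum>c\<in>C. a c * E c z)" ..
    define FS where "FS = {f. f dvd N \<and> gcd f (N div f) dvd N div Nstar}"
    have "\<forall>f\<in>FS. \<exists>\<beta>. \<forall>r. (f, r) \<in> sing_cusps N Nstar \<longrightarrow>
           a (f, r) = (\<Sum>T\<in>{T \<in> D_index N Nstar psi. fst T = f}. \<beta> T * fst (snd T) (- rep f r))"
    proof
      fix f assume "f \<in> FS"
      then have fN: "f dvd N" and gc: "gcd f (N div f) dvd N div Nstar" unfolding FS_def by auto
      show "\<exists>\<beta>. \<forall>r. (f, r) \<in> sing_cusps N Nstar \<longrightarrow>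
           a (f, r) = (\<Sum>T\<in>{T \<in> D_index N Nstar psi. fst T = f}. \<beta> T * fst (snd T) (- rep f r))"
        using D_span[OF N psi_char conductor reps fN gc, where phi="\<lambda>r. a (f, r)"] .
    qed
    then obtain B where B: "\<forall>f\<in>FS. \<forall>r. (f, r) \<in> sing_cusps N Nstar \<longrightarrow>
           a (f, r) = (\<Sum>T\<in>{T \<in> D_index N Nstar psi. fst T = f}. B f T * fst (snd T) (- rep f r))"
      by (rule bchoice[elim_format]) blast
    define b where "b T = B (fst T) T" for T
    have finIx: "finite Ix" unfolding Ix_def using D_index_finite[OF N] .
    have "F z = (\<Sum>T\<in>Ix. b T * D_series N Nstar rep E (fst T) (fst (snd T)) z)" if z: "z \<in> upper_half" for z
    proof -
      have "(\<Sum>T\<in>Ix. b T * D_series N Nstar rep E (fst T) (fst (snd T)) z)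
          = (\<Sum>T\<in>Ix. \<Sum>c\<in>C. b T * coef (fst T) (fst (snd T)) c * E c z)"
        unfolding Dser by (simp add: sum_distrib_left mult.assoc)
      also have "\<dots> = (\<Sum>c\<in>C. (\<Sum>T\<in>Ix. b T * coef (fst T) (fst (snd T)) c) * E c z)"
        by (subst sum.swap) (simp add: sum_distrib_right)
      also have "\<dots> = (\<Sum>c\<in>C. a c * E c z)"
      proof (rule sum.cong[OF refl])
        fix c assume cC: "c \<in> C"
        obtain f r where ce: "c = (f, r)" by (cases c) auto
        have fr: "(f, r) \<in> sing_cusps N Nstar" using cC ce C_def by simp
        then have fFS: "f \<in> FS" unfolding FS_def using cusp_iff by blast
        have "(\<Sum>T\<in>Ix. b T * coef (fst T) (fst (snd T)) c) =
            (\<Sum>T\<in>Ix. if fst T = f then B f T * fst (snd T) (- rep f r) else 0)"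
          unfolding b_def coef_def ce by (intro sum.cong) auto
        also have "\<dots> = (\<Sum>T\<in>{T \<in> Ix. fst T = f}. B f T * fst (snd T) (- rep f r))"
          by (rule sum.inter_filter[OF finIx, symmetric])
        also have "\<dots> = a (f, r)" using B fFS fr unfolding Ix_def by simp
        finally show "(\<Sum>T\<in>Ix. b T * coef (fst T) (fst (snd T)) c) * E c z = a c * E c z" using ce by simp
      qed
      also have "\<dots> = F z" using a z by simp
      finally show ?thesis by simp
    qed
    then show ?thesis by blast
  qed
  show ?thesis
  proof (intro conjI)
    show "finite (D_index N Nstar psi)" using D_index_finite[OF N] .
    show "\<forall>(f, chi1, chi2)\<in>D_index N Nstar psi. D_series N Nstar rep E f chi1 \<in> eis_span (sing_cusps N Nstar) E"
      using span unfolding C_def by auto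
    show "\<forall>(f, chi1, chi2)\<in>D_index N Nstar psi. \<forall>(f', chi1', chi2')\<in>D_index N Nstar psi.
          (f, chi1, chi2) \<noteq> (f', chi1', chi2') \<longrightarrow>
          formal_inner (sing_cusps N Nstar) E
             (D_series N Nstar rep E f chi1) (D_series N Nstar rep E f' chi1') = 0"
      using P3 unfolding C_def Ix_def by auto
    show "\<forall>(f, chi1, chi2)\<in>D_index N Nstar psi.
          formal_inner (sing_cusps N Nstar) E
             (D_series N Nstar rep E f chi1) (D_series N Nstar rep E f chi1) \<noteq> 0"
      using P4 unfolding C_def Ix_def by auto
    show "\<forall>F\<in>eis_span (sing_cusps N Nstar) E. \<exists>b.
          \<forall>z\<in>upper_half. F z = (\<Sum>(f, chi1, chi2)\<in>D_index N Nstar psi.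
                                   b (f, chi1, chi2) * D_series N Nstar rep E f chi1 z)"
    proof
      fix F assume "F \<in> eis_span (sing_cusps N Nstar) E"
      then obtain b where b: "\<forall>z\<in>upper_half. F z = (\<Sum>T\<in>Ix. b T * D_series N Nstar rep E (fst T) (fst (snd T)) z)"
        using P5 unfolding C_def by blast
      have "\<forall>z\<in>upper_half. F z = (\<Sum>(f, chi1, chi2)\<in>D_index N Nstar psi. b (f, chi1, chi2) * D_series N Nstar rep E f chi1 z)"
      proof
        fix z assume "z \<in> upper_half"
        then have "F z = (\<Sum>T\<in>Ix. b T * D_series N Nstar rep E (fst T) (fst (snd T)) z)" using b by blast
        also have "\<dots> = (\<Sum>(f, chi1, chi2)\<in>D_index N Nstar psi. b (f, chi1, chi2) * D_series N Nstar rep E f chi1 z)"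
          unfolding Ix_def by (intro sum.cong) auto
        finally show "F z = (\<Sum>(f, chi1, chi2)\<in>D_index N Nstar psi. b (f, chi1, chi2) * D_series N Nstar rep E f chi1 z)" .
      qed
      then show "\<exists>b. \<forall>z\<in>upper_half. F z = (\<Sum>(f, chi1, chi2)\<in>D_index N Nstar psi. b (f, chi1, chi2) * D_series N Nstar rep E f chi1 z)"
        by blast
    qed
  qed
qed

end
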